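(* The following two statements are equivalent: (a) Every cyclically $4$-edge-connected cubic graph $G$ admits a proper $5$-edge-coloring $c$ with $|N_G(c)|\le 9$. (b) There exists a sublinear function $f:\mathbb{N}\to\mathbb{N}$ such that every cyclically $4$-edge-connected cubic graph $G$ admits a proper $5$-edge-coloring $c$ with $|N_G(c)|\le f(|V(G)|)$.
   Context: Graphs are finite, undirected, loopless, and may contain parallel edges. A cubic graph is cyclically $4$-edge-connected if it has no edge cut of size less than $4$ whose removal leaves at least two components each containing a cycle. A proper $k$-edge-coloring of $G$ is a map $c:E(G)\to\{1,\dots,k\}$ with adjacent edges receiving different colors. For such $c$ and a vertex $v$, $S_c(v)$ is the set of colors on edges incident to $v$. An edge $uv$ of a cubic graph is poor if $|S_c(u)\cup S_c(v)|=3$, rich if $|S_c(u)\cup S_c(v)|=5$, and abnormal if it is neither poor nor rich. $N_G(c)$ denotes the set of abnormal edges of $G$ with respect to $c$. A function $f:\mathbb{N}\to\mathbb{N}$ is sublinear if $\lim_{n\to\infty} f(n)/n=0$. *)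

theory Defs
  imports Complex_Main
begin

text \<open>A finite loopless multigraph: vertex set V, edge set E (edge identifiers, so
parallel edges are allowed), and an endpoint map giving each edge a 2-element set
of endpoints. Vertices and edges are natural numbers (every finite multigraph is
isomorphic to one of this form).\<close>

type_synonym mgraph = "nat set \<times> nat set \<times> (nat \<Rightarrow> nat set)"

definition verts :: "mgraph \<Rightarrow> nat set" where "verts G = fst G"
definition edges :: "mgraph \<Rightarrow> nat set" where "edges G = fst (snd G)"
definition ends :: "mgraph \<Rightarrow> nat \<Rightarrow> nat set" where "ends G = snd (snd G)"

definition multigraph :: "mgraph \<Rightarrow> bool" where
  "multigraph G \<longleftrightarrow> finite (verts G) \<and> finite (edges G) \<and>
     (\<forall>e\<in>edges G. ends G e \<subseteq> verts G \<and> card (ends G e) = 2)"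

definition incident :: "mgraph \<Rightarrow> nat \<Rightarrow> nat set" where
  "incident G v = {e \<in> edges G. v \<in> ends G e}"

definition cubic :: "mgraph \<Rightarrow> bool" where
  "cubic G \<longleftrightarrow> multigraph G \<and> (\<forall>v\<in>verts G. card (incident G v) = 3)"

definition adj_in :: "mgraph \<Rightarrow> nat set \<Rightarrow> (nat \<times> nat) set" where
  "adj_in G E' = {(u, w). \<exists>e\<in>E'. ends G e = {u, w}}"

definition reach_in :: "mgraph \<Rightarrow> nat set \<Rightarrow> (nat \<times> nat) set" where
  "reach_in G E' = (adj_in G E')\<^sup>* \<inter> (verts G \<times> verts G)"

definition components_in :: "mgraph \<Rightarrow> nat set \<Rightarrow> nat set set" where
  "components_in G E' = verts G // reach_in G E'"

text \<open>A cycle using only edges in E' and only vertices in C: distinct vertices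
\<open>vs!0, ..., vs!(k-1)\<close> and distinct edges \<open>es!i\<close> joining \<open>vs!i\<close> and \<open>vs!((i+1) mod k)\<close>,
with \<open>k \<ge> 2\<close> (a 2-cycle is a pair of parallel edges).\<close>
definition has_cycle_in :: "mgraph \<Rightarrow> nat set \<Rightarrow> nat set \<Rightarrow> bool" where
  "has_cycle_in G E' C \<longleftrightarrow> (\<exists>vs es. length vs = length es \<and> length vs \<ge> 2 \<and>
      distinct vs \<and> distinct es \<and> set vs \<subseteq> C \<and> set es \<subseteq> E' \<and>
      (\<forall>i < length vs. ends G (es ! i) = {vs ! i, vs ! ((i + 1) mod length vs)}))"

definition cyclic_cut :: "mgraph \<Rightarrow> nat set \<Rightarrow> bool" where
  "cyclic_cut G F \<longleftrightarrow> F \<subseteq> edges G \<and>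
     (\<exists>C1 \<in> components_in G (edges G - F). \<exists>C2 \<in> components_in G (edges G - F).
        C1 \<noteq> C2 \<and> has_cycle_in G (edges G - F) C1 \<and> has_cycle_in G (edges G - F) C2)"

definition cyc4_edge_connected :: "mgraph \<Rightarrow> bool" where
  "cyc4_edge_connected G \<longleftrightarrow> \<not> (\<exists>F. cyclic_cut G F \<and> card F < 4)"

definition proper_edge_coloring :: "mgraph \<Rightarrow> nat \<Rightarrow> (nat \<Rightarrow> nat) \<Rightarrow> bool" where
  "proper_edge_coloring G k c \<longleftrightarrow> (\<forall>e\<in>edges G. c e \<in> {1..k}) \<and>
     (\<forall>e\<in>edges G. \<forall>e'\<in>edges G. e \<noteq> e' \<and> ends G e \<inter> ends G e' \<noteq> {} \<longrightarrow> c e \<noteq> c e')"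

definition colors_at :: "mgraph \<Rightarrow> (nat \<Rightarrow> nat) \<Rightarrow> nat \<Rightarrow> nat set" where
  "colors_at G c v = c ` incident G v"

definition poor_edge :: "mgraph \<Rightarrow> (nat \<Rightarrow> nat) \<Rightarrow> nat \<Rightarrow> bool" where
  "poor_edge G c e \<longleftrightarrow> (\<exists>u w. ends G e = {u, w} \<and> card (colors_at G c u \<union> colors_at G c w) = 3)"

definition rich_edge :: "mgraph \<Rightarrow> (nat \<Rightarrow> nat) \<Rightarrow> nat \<Rightarrow> bool" where
  "rich_edge G c e \<longleftrightarrow> (\<exists>u w. ends G e = {u, w} \<and> card (colors_at G c u \<union> colors_at G c w) = 5)"

definition abnormal_edges :: "mgraph \<Rightarrow> (nat \<Rightarrow> nat) \<Rightarrow> nat set" where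
  "abnormal_edges G c = {e \<in> edges G. \<not> poor_edge G c e \<and> \<not> rich_edge G c e}"

definition sublinear :: "(nat \<Rightarrow> nat) \<Rightarrow> bool" where
  "sublinear f \<longleftrightarrow> (\<lambda>n. real (f n) / real n) \<longlonglongrightarrow> 0"

end

theory Submission
  imports Defs "HOL-Library.Nat_Bijection"
begin


definition inside :: "mgraph \<Rightarrow> nat set \<Rightarrow> nat set" where
  "inside G S = {e \<in> edges G. ends G e \<subseteq> S}"
definition cutE :: "mgraph \<Rightarrow> nat set \<Rightarrow> nat set" where
  "cutE G S = {e \<in> edges G. ends G e \<inter> S \<noteq> {} \<and> \<not> ends G e \<subseteq> S}"

lemma ends2: assumes "multigraph G" "e \<in> edges G"
  obtains a b where "ends G e = {a,b}" "a \<noteq> b" "a \<in> verts G" "b \<in> verts G"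
  using assms unfolding multigraph_def by (metis card_2_iff insert_subset)

lemma handshake:
  assumes G: "multigraph G" and S: "S \<subseteq> verts G"
  shows "(\<Sum>v\<in>S. card (incident G v)) = 2 * card (inside G S) + card (cutE G S)"
proof -
  have fE: "finite (edges G)" and fV: "finite (verts G)" using G unfolding multigraph_def by auto
  have fS: "finite S" using S fV finite_subset by blast
  have "(\<Sum>v\<in>S. card (incident G v)) = (\<Sum>v\<in>S. \<Sum>e\<in>edges G. if v \<in> ends G e then 1 else 0)"
    unfolding incident_def using fE by (simp add: sum.If_cases Int_def)
  also have "\<dots> = (\<Sum>e\<in>edges G. \<Sum>v\<in>S. if v \<in> ends G e then 1 else 0)"
    by (rule sum.swap)
  also have "\<dots> = (\<Sum>e\<in>edges G. card (S \<inter> ends G e))"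
    using fS by (simp add: sum.If_cases Int_def)
  also have "\<dots> = (\<Sum>e\<in>edges G. (if e \<in> inside G S then 2 else 0) + (if e \<in> cutE G S then 1 else 0))"
  proof (rule sum.cong)
    fix e assume e: "e \<in> edges G"
    then obtain a b where ab: "ends G e = {a,b}" "a \<noteq> b" using ends2[OF G] by metis
    show "card (S \<inter> ends G e) = (if e \<in> inside G S then 2 else 0) + (if e \<in> cutE G S then 1 else 0)"
      using ab e unfolding inside_def cutE_def
      by (cases "a \<in> S"; cases "b \<in> S") (auto simp: Int_insert_right)
  qed simp
  also have "\<dots> = 2 * card (inside G S) + card (cutE G S)"
    using fE by (simp add: sum.distrib sum.If_cases inside_def cutE_def Int_def)
  finally show ?thesis .
qed


definition is_path :: "mgraph \<Rightarrow> nat set \<Rightarrow> nat set \<Rightarrow> nat list \<Rightarrow> nat list \<Rightarrow> bool" where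
  "is_path G E' S vs es \<longleftrightarrow> length vs = Suc (length es) \<and> distinct vs \<and> set vs \<subseteq> S \<and>
     set es \<subseteq> E' \<and> (\<forall>i<length es. ends G (es!i) = {vs!i, vs!Suc i})"

lemma two_elems:
  assumes "2 \<le> card A" obtains a b where "a \<in> A" "b \<in> A" "a \<noteq> b"
proof -
  have "finite A" using assms by (metis card.infinite not_numeral_le_zero)
  then have "\<not> (\<forall>a\<in>A. \<forall>b\<in>A. a = b)" using assms card_le_Suc0_iff_eq[of A] by auto
  then show ?thesis using that by blast
qed

lemma path_distinct_es:
  assumes "is_path G E' S vs es" shows "distinct es"
proof -
  have d: "distinct vs" and l: "length vs = Suc (length es)"
    and en: "\<forall>i<length es. ends G (es!i) = {vs!i, vs!Suc i}" using assms unfolding is_path_def by auto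
  show ?thesis unfolding distinct_conv_nth
  proof (intro allI impI)
    fix i j assume ij: "i < length es" "j < length es" "i \<noteq> j"
    show "es!i \<noteq> es!j"
    proof
      assume "es!i = es!j"
      then have "{vs!i, vs!Suc i} = {vs!j, vs!Suc j}" using en ij by metis
      then show False using d ij l by (auto simp: doubleton_eq_iff nth_eq_iff_index_eq)
    qed
  qed
qed

lemma close_cycle:
  assumes p: "is_path G E' S vs es" and t: "1 \<le> t" "t < length vs" and f: "f \<in> E'"
    and fe: "ends G f = {vs!t, vs!0}" and fn: "f \<notin> set (take t es)"
  shows "has_cycle_in G E' S"
proof -
  have le: "t \<le> length es" using p t unfolding is_path_def by auto
  define vs' where "vs' = take (Suc t) vs"
  define es' where "es' = take t es @ [f]"
  have lv: "length vs' = Suc t" using t unfolding vs'_def by auto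
  have le': "length es' = Suc t" using le unfolding es'_def by auto
  have "\<forall>i < length vs'. ends G (es' ! i) = {vs' ! i, vs' ! ((i + 1) mod length vs')}"
  proof (intro allI impI)
    fix i assume i: "i < length vs'"
    show "ends G (es' ! i) = {vs' ! i, vs' ! ((i + 1) mod length vs')}"
    proof (cases "i < t")
      case True
      then have "es' ! i = es ! i" unfolding es'_def using le by (simp add: nth_append)
      moreover have "(i+1) mod length vs' = Suc i" using True lv by simp
      ultimately show ?thesis using p True le unfolding is_path_def vs'_def by auto
    next
      case False
      then have "i = t" using i lv by simp
      then show ?thesis using fe le lv unfolding es'_def vs'_def by (simp add: nth_append)
    qed
  qed
  moreover have "distinct vs'" using p unfolding is_path_def vs'_def by auto
  moreover have "distinct es'" using path_distinct_es[OF p] fn unfolding es'_def by auto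
  moreover have "set vs' \<subseteq> S" using p unfolding is_path_def vs'_def by (meson order_trans set_take_subset)
  moreover have "set es' \<subseteq> E'" using p f unfolding is_path_def es'_def by (auto dest: in_set_takeD)
  ultimately show ?thesis unfolding has_cycle_in_def using lv le' t
    by (intro exI[of _ vs'] exI[of _ es']) auto
qed

lemma path_rev:
  assumes "is_path G E' S vs es" shows "is_path G E' S (rev vs) (rev es)"
  unfolding is_path_def
proof (intro conjI allI impI)
  fix i assume i: "i < length (rev es)"
  have l: "length vs = Suc (length es)" using assms unfolding is_path_def by auto
  have "ends G (es ! (length es - Suc i)) = {vs ! (length es - Suc i), vs ! Suc (length es - Suc i)}"
    using assms i unfolding is_path_def by auto
  moreover have "Suc (length es - Suc i) = length es - i" using i by simp
  ultimately show "ends G (rev es ! i) = {rev vs ! i, rev vs ! Suc i}"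
    using i l by (auto simp: rev_nth)
qed (use assms in \<open>auto simp: is_path_def\<close>)

lemma path_len_bound:
  assumes "is_path G E' S vs es" "finite S" shows "length vs \<le> card S"
  using assms unfolding is_path_def by (metis card_mono distinct_card)

lemma endpoint_deg:
  assumes G: "multigraph G" and SV: "S \<subseteq> verts G"
    and p: "is_path G (inside G S) S vs es" and l2: "2 \<le> length vs"
    and mx: "\<And>vs' es'. is_path G (inside G S) S vs' es' \<Longrightarrow> length vs' \<le> length vs"
    and nc: "\<not> has_cycle_in G (inside G S) S"
  shows "card (incident G (vs!0) \<inter> inside G S) \<le> 1"
proof (rule ccontr)
  assume "\<not> ?thesis"
  then have "2 \<le> card (incident G (vs!0) \<inter> inside G S)" by simp
  then obtain f1 f2 where f12: "f1 \<in> incident G (vs!0) \<inter> inside G S" "f2 \<in> incident G (vs!0) \<inter> inside G S" "f1 \<noteq> f2"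
    by (rule two_elems) blast
  have les: "length vs = Suc (length es)" using p unfolding is_path_def by auto
  have key: "\<exists>t. t = 1 \<and> ends G f = {vs!0, vs!1}" if fi: "f \<in> incident G (vs!0) \<inter> inside G S" for f
  proof -
    have fE: "f \<in> edges G" and v0: "vs!0 \<in> ends G f" and fS: "ends G f \<subseteq> S"
      using fi unfolding incident_def inside_def by auto
    obtain a b where ab: "ends G f = {a,b}" "a \<noteq> b" using ends2[OF G fE] by metis
    obtain w where w: "ends G f = {vs!0, w}" "w \<noteq> vs!0"
      using ab v0 by (metis doubleton_eq_iff insertE singletonD)
    have wS: "w \<in> S" using w fS by auto
    show ?thesis
    proof (cases "w \<in> set vs")
      case False
      have "is_path G (inside G S) S (w # vs) (f # es)"
        using p False wS fi w unfolding is_path_def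
        by (auto simp: nth_Cons' insert_commute)
      then have "length (w # vs) \<le> length vs" by (rule mx)
      then show ?thesis by simp
    next
      case True
      then obtain t where t: "t < length vs" "vs!t = w" by (metis in_set_conv_nth)
      have t0: "t \<noteq> 0" using t(2) w(2) by (cases t) auto
      show ?thesis
      proof (cases "t = 1")
        case True then show ?thesis using w t by auto
      next
        case False
        have "f \<notin> set (take t es)"
        proof
          assume "f \<in> set (take t es)"
          then obtain i where i: "i < t" "i < length es" "es!i = f"
            by (auto simp: in_set_conv_nth)
          then have "{vs!i, vs!Suc i} = {vs!0, vs!t}" using p w t unfolding is_path_def by auto
          moreover have "distinct vs" using p unfolding is_path_def by auto
          ultimately show False using i t t0 False les
            by (auto simp: doubleton_eq_iff nth_eq_iff_index_eq)
        qed
        then have "has_cycle_in G (inside G S) S"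
          using close_cycle[OF p, of t f] t t0 fi w by (auto simp: insert_commute)
        then show ?thesis using nc by simp
      qed
    qed
  qed
  have e1: "ends G f1 = {vs!0, vs!1}" "ends G f2 = {vs!0, vs!1}" using key f12 by auto
  obtain f where f: "f \<in> {f1,f2}" "f \<noteq> es!0" using f12(3) by auto
  have fi: "f \<in> inside G S" using f f12 by auto
  have "f \<notin> set (take 1 es)" using f les l2 by (cases es) auto
  then have "has_cycle_in G (inside G S) S"
    using close_cycle[OF p, of 1 f] l2 fi f e1 by (auto simp: insert_commute)
  then show False using nc by simp
qed

lemma side_cycle:
  assumes G: "multigraph G" and SV: "S \<subseteq> verts G"
    and deg: "\<And>v. v \<in> S \<Longrightarrow> card (incident G v) = 3"
    and S2: "2 \<le> card S" and cut3: "card (cutE G S) \<le> 3"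
  shows "has_cycle_in G (inside G S) S"
proof (rule ccontr)
  assume nc: "\<not> ?thesis"
  have fE: "finite (edges G)" and fV: "finite (verts G)" using G unfolding multigraph_def by auto
  have fS: "finite S" using SV fV finite_subset by blast
  have fC: "finite (cutE G S)" using fE unfolding cutE_def by auto
  have split: "incident G v \<subseteq> inside G S \<union> cutE G S" if "v \<in> S" for v
    using that unfolding incident_def inside_def cutE_def by auto
  have cutv: "2 \<le> card (incident G v \<inter> cutE G S)" if v: "v \<in> S" "card (incident G v \<inter> inside G S) \<le> 1" for v
  proof -
    have fi: "finite (incident G v)" using fE unfolding incident_def by auto
    have "incident G v = (incident G v \<inter> inside G S) \<union> (incident G v \<inter> cutE G S)"
      using split[OF v(1)] by auto
    then have "card (incident G v) \<le> card (incident G v \<inter> inside G S) + card (incident G v \<inter> cutE G S)"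
      by (metis card_Un_le)
    then show ?thesis using deg[OF v(1)] v(2) by simp
  qed
  have disj: "(incident G u \<inter> cutE G S) \<inter> (incident G w \<inter> cutE G S) = {}"
    if "u \<in> S" "w \<in> S" "u \<noteq> w" for u w
  proof (rule ccontr)
    assume "\<not> ?thesis"
    then obtain e where e: "e \<in> edges G" "u \<in> ends G e" "w \<in> ends G e" "e \<in> cutE G S"
      unfolding incident_def by auto
    obtain a b where ab: "ends G e = {a,b}" using ends2[OF G e(1)] by metis
    then have "ends G e = {u,w}" using e that by auto
    then show False using e(4) that unfolding cutE_def by auto
  qed
  have twoV: "card (cutE G S) \<ge> 4" if "u \<in> S" "w \<in> S" "u \<noteq> w"
     "2 \<le> card (incident G u \<inter> cutE G S)" "2 \<le> card (incident G w \<inter> cutE G S)" for u w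
  proof -
    have "card ((incident G u \<inter> cutE G S) \<union> (incident G w \<inter> cutE G S)) \<le> card (cutE G S)"
      using fC by (intro card_mono) auto
    moreover have "card ((incident G u \<inter> cutE G S) \<union> (incident G w \<inter> cutE G S)) =
        card (incident G u \<inter> cutE G S) + card (incident G w \<inter> cutE G S)"
      using disj[OF that(1-3)] fC by (intro card_Un_disjoint) auto
    ultimately show ?thesis using that by simp
  qed
  have "inside G S \<noteq> {}"
  proof
    assume em: "inside G S = {}"
    obtain u w where uw: "u \<in> S" "w \<in> S" "u \<noteq> w" using two_elems[OF S2] by blast
    have z: "card (incident G x \<inter> inside G S) \<le> 1" for x using em by simp
    have "card (cutE G S) \<ge> 4" by (rule twoV[OF uw cutv[OF uw(1) z] cutv[OF uw(2) z]])
    then show False using cut3 by simp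
  qed
  then obtain e where e: "e \<in> inside G S" by auto
  then have eE: "e \<in> edges G" and eS: "ends G e \<subseteq> S" unfolding inside_def by auto
  obtain a b where ab: "ends G e = {a,b}" "a \<noteq> b" using ends2[OF G eE] by metis
  have p0: "is_path G (inside G S) S [a,b] [e]"
    unfolding is_path_def using ab e eS by simp
  define P where "P n \<longleftrightarrow> (\<exists>vs es. is_path G (inside G S) S vs es \<and> length vs = n)" for n
  have P2: "P 2" unfolding P_def by (rule exI[of _ "[a,b]"], rule exI[of _ "[e]"]) (use p0 in simp)
  have bnd: "\<forall>n. P n \<longrightarrow> n \<le> card S"
  proof (intro allI impI)
    fix n assume "P n"
    then obtain vs es where "is_path G (inside G S) S vs es" "length vs = n" unfolding P_def by blast
    then show "n \<le> card S" using path_len_bound[OF _ fS] by blast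
  qed
  obtain m where m: "P m" "\<forall>n. P n \<longrightarrow> n \<le> m" using Nat.ex_has_greatest_nat[OF P2 bnd] by blast
  then obtain vs es where p: "is_path G (inside G S) S vs es" "length vs = m" unfolding P_def by blast
  have m2: "2 \<le> m" using m(2) P2 by simp
  have mx: "\<And>vs' es'. is_path G (inside G S) S vs' es' \<Longrightarrow> length vs' \<le> length vs"
  proof -
    fix vs' es' assume "is_path G (inside G S) S vs' es'"
    then have "P (length vs')" unfolding P_def by blast
    then show "length vs' \<le> length vs" using m(2) p(2) by simp
  qed
  have pr: "is_path G (inside G S) S (rev vs) (rev es)" using path_rev p by blast
  have mx': "\<And>vs' es'. is_path G (inside G S) S vs' es' \<Longrightarrow> length vs' \<le> length (rev vs)"
    using mx by simp
  have lv: "2 \<le> length vs" using p(2) m2 by simp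
  have d1: "card (incident G (vs!0) \<inter> inside G S) \<le> 1"
    by (rule endpoint_deg[OF G SV p(1) lv mx nc])
  have lv': "2 \<le> length (rev vs)" using lv by simp
  have d2: "card (incident G (rev vs!0) \<inter> inside G S) \<le> 1"
    by (rule endpoint_deg[OF G SV pr lv' mx' nc])
  have dist: "distinct vs" "set vs \<subseteq> S" using p unfolding is_path_def by auto
  have r0: "rev vs ! 0 = vs ! (length vs - 1)" using lv rev_nth[of 0 vs] by (cases vs) auto
  have in1: "vs!0 \<in> S" "rev vs ! 0 \<in> S" using dist(2) lv r0 by (auto intro!: nth_mem[THEN subsetD[OF dist(2)]])
  have ne: "vs!0 \<noteq> rev vs ! 0" unfolding r0 using dist(1) lv nth_eq_iff_index_eq[OF dist(1), of 0 "length vs - 1"] by (cases vs) auto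
  have c1: "2 \<le> card (incident G (vs!0) \<inter> cutE G S)" by (rule cutv[OF in1(1) d1])
  have c2: "2 \<le> card (incident G (rev vs!0) \<inter> cutE G S)" by (rule cutv[OF in1(2) d2])
  have "card (cutE G S) \<ge> 4" by (rule twoV[OF in1 ne c1 c2])
  then show False using cut3 by simp
qed


definition CT :: "mgraph \<Rightarrow> bool" where
  "CT G \<longleftrightarrow> (\<forall>S \<subseteq> verts G. card (cutE G S) \<le> 3 \<longrightarrow> card S \<le> 1 \<or> card (verts G - S) \<le> 1)"

lemma adj_sym: "(u,w) \<in> adj_in G E' \<Longrightarrow> (w,u) \<in> adj_in G E'"
  unfolding adj_in_def by (auto simp: insert_commute)

lemma rtr_sym: "(u,w) \<in> (adj_in G E')\<^sup>* \<Longrightarrow> (w,u) \<in> (adj_in G E')\<^sup>*"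
proof (induction rule: rtrancl_induct)
  case (step y z)
  then show ?case using adj_sym by (meson converse_rtrancl_into_rtrancl)
qed simp

lemma comp_class: "C \<in> components_in G E' \<Longrightarrow> \<exists>a\<in>verts G. C = reach_in G E' `` {a}"
  unfolding components_in_def quotient_def by auto

lemma comp_closed:
  assumes G: "multigraph G" and C: "C \<in> components_in G E'" and e: "e \<in> E'" "e \<in> edges G"
    and ue: "ends G e = {u,w}" and u: "u \<in> C"
  shows "w \<in> C"
proof -
  obtain a where a: "a \<in> verts G" "C = reach_in G E' `` {a}" using comp_class[OF C] by blast
  have "(a,u) \<in> (adj_in G E')\<^sup>*" using u a unfolding reach_in_def by auto
  moreover have "(u,w) \<in> adj_in G E'" using e ue unfolding adj_in_def by auto
  ultimately have "(a,w) \<in> (adj_in G E')\<^sup>*" by (rule rtrancl_into_rtrancl)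
  moreover have "w \<in> verts G" using G e ue unfolding multigraph_def by auto
  ultimately show ?thesis using a unfolding reach_in_def by auto
qed

lemma comp_sub: "C \<in> components_in G E' \<Longrightarrow> C \<subseteq> verts G"
  unfolding components_in_def quotient_def reach_in_def by auto

lemma comp_disj:
  assumes C1: "C1 \<in> components_in G E'" and C2: "C2 \<in> components_in G E'" and ne: "C1 \<noteq> C2"
  shows "C1 \<inter> C2 = {}"
proof (rule ccontr)
  assume "C1 \<inter> C2 \<noteq> {}"
  then obtain x where x: "x \<in> C1" "x \<in> C2" by auto
  obtain a where a: "a \<in> verts G" "C1 = reach_in G E' `` {a}" using comp_class[OF C1] by blast
  obtain b where b: "b \<in> verts G" "C2 = reach_in G E' `` {b}" using comp_class[OF C2] by blast
  have ax: "(a,x) \<in> (adj_in G E')\<^sup>*" and bx: "(b,x) \<in> (adj_in G E')\<^sup>*"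
    using x a b unfolding reach_in_def by auto
  have "(a,b) \<in> (adj_in G E')\<^sup>*" using ax rtr_sym[OF bx] by (rule rtrancl_trans)
  have "C1 \<subseteq> C2"
  proof
    fix y assume "y \<in> C1"
    then have "(a,y) \<in> (adj_in G E')\<^sup>*" "y \<in> verts G" using a unfolding reach_in_def by auto
    moreover have "(b,a) \<in> (adj_in G E')\<^sup>*" using rtr_sym[OF \<open>(a,b) \<in> _\<close>] .
    ultimately show "y \<in> C2" using b a unfolding reach_in_def by (auto intro: rtrancl_trans)
  qed
  moreover have "C2 \<subseteq> C1"
  proof
    fix y assume "y \<in> C2"
    then have "(b,y) \<in> (adj_in G E')\<^sup>*" "y \<in> verts G" using b unfolding reach_in_def by auto
    then show "y \<in> C1" using b a \<open>(a,b) \<in> _\<close> unfolding reach_in_def by (auto intro: rtrancl_trans)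
  qed
  ultimately show False using ne by auto
qed

lemma cycle_card:
  assumes "has_cycle_in G E' C" "finite C" shows "2 \<le> card C"
proof -
  obtain vs where "length vs \<ge> 2" "distinct vs" "set vs \<subseteq> C" using assms unfolding has_cycle_in_def by blast
  then show ?thesis using assms(2) by (metis card_mono distinct_card order_trans)
qed

lemma CT_imp_cyc4:
  assumes G: "multigraph G" and ct: "CT G" shows "cyc4_edge_connected G"
  unfolding cyc4_edge_connected_def
proof
  assume "\<exists>F. cyclic_cut G F \<and> card F < 4"
  then obtain F C1 C2 where F: "F \<subseteq> edges G" "card F < 4" and
    C: "C1 \<in> components_in G (edges G - F)" "C2 \<in> components_in G (edges G - F)" "C1 \<noteq> C2"
    "has_cycle_in G (edges G - F) C1" "has_cycle_in G (edges G - F) C2"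
    unfolding cyclic_cut_def by blast
  have fV: "finite (verts G)" and fE: "finite (edges G)" using G unfolding multigraph_def by auto
  have sub: "cutE G C1 \<subseteq> F"
  proof
    fix e assume e: "e \<in> cutE G C1"
    then have eE: "e \<in> edges G" unfolding cutE_def by auto
    obtain a b where ab: "ends G e = {a,b}" using ends2[OF G eE] by metis
    show "e \<in> F"
    proof (rule ccontr)
      assume "e \<notin> F"
      then have "e \<in> edges G - F" using eE by auto
      then have "a \<in> C1 \<longleftrightarrow> b \<in> C1" using comp_closed[OF G C(1) _ eE] ab by (metis insert_commute)
      then show False using e ab unfolding cutE_def by auto
    qed
  qed
  have "card (cutE G C1) \<le> 3" using card_mono[OF finite_subset[OF F(1) fE] sub] F(2) by simp
  moreover have C1V: "C1 \<subseteq> verts G" using comp_sub[OF C(1)] .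
  ultimately have "card C1 \<le> 1 \<or> card (verts G - C1) \<le> 1" using ct unfolding CT_def by blast
  moreover have "2 \<le> card C1" using cycle_card[OF C(4)] finite_subset[OF C1V fV] by blast
  moreover have "C2 \<subseteq> verts G - C1" using comp_sub[OF C(2)] comp_disj[OF C(1,2,3)] by auto
  then have "2 \<le> card (verts G - C1)"
    using cycle_card[OF C(5)] fV by (meson card_mono finite_Diff order_trans finite_subset)
  ultimately show False by simp
qed

lemma cut_compl:
  assumes G: "multigraph G" and S: "S \<subseteq> verts G" shows "cutE G (verts G - S) = cutE G S"
  using G S unfolding cutE_def multigraph_def by blast

lemma reach_stays:
  assumes G: "multigraph G" and "(a,x) \<in> (adj_in G (edges G - cutE G T))\<^sup>*" and "a \<in> T"
  shows "x \<in> T"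
  using assms(2,3)
proof (induction rule: rtrancl_induct)
  case (step y z)
  then obtain e where e: "e \<in> edges G" "e \<notin> cutE G T" "ends G e = {y,z}" unfolding adj_in_def by auto
  then show ?case using step unfolding cutE_def by auto
qed simp

lemma comp_cycle:
  assumes G: "multigraph G" and TV: "T \<subseteq> verts G" and cyc: "has_cycle_in G (inside G T) T"
  shows "\<exists>C \<in> components_in G (edges G - cutE G T). C \<subseteq> T \<and> has_cycle_in G (edges G - cutE G T) C"
proof -
  let ?E = "edges G - cutE G T"
  obtain vs es where c: "length vs = length es" "length vs \<ge> 2" "distinct vs" "distinct es"
    "set vs \<subseteq> T" "set es \<subseteq> inside G T"
    "\<forall>i < length vs. ends G (es ! i) = {vs ! i, vs ! ((i + 1) mod length vs)}"
    using cyc unfolding has_cycle_in_def by blast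
  have insE: "inside G T \<subseteq> ?E" unfolding inside_def cutE_def by auto
  let ?a = "vs!0"
  have "0 < length vs" using c(2) by linarith
  then have aT: "?a \<in> T" using c(5) nth_mem[of 0 vs] by blast
  define C where "C = reach_in G ?E `` {?a}"
  have Cc: "C \<in> components_in G ?E" unfolding C_def components_in_def quotient_def using aT TV by auto
  have CT: "C \<subseteq> T" unfolding C_def reach_in_def using reach_stays[OF G _ aT] by auto
  have reach: "(?a, vs!j) \<in> (adj_in G ?E)\<^sup>*" if "j < length vs" for j
    using that
  proof (induction j)
    case (Suc j)
    have "ends G (es ! j) = {vs ! j, vs ! Suc j}" using c(7) Suc.prems
      by (metis Suc_eq_plus1 Suc_lessD mod_less)
    moreover have "es ! j \<in> ?E" using c(1,6) insE Suc.prems by (metis Suc_lessD nth_mem subsetD)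
    ultimately have "(vs!j, vs!Suc j) \<in> adj_in G ?E" unfolding adj_in_def by auto
    then show ?case using Suc by (meson Suc_lessD rtrancl_into_rtrancl)
  qed simp
  have "set vs \<subseteq> C"
  proof
    fix x assume "x \<in> set vs"
    then obtain j where "j < length vs" "x = vs!j" by (metis in_set_conv_nth)
    moreover have "x \<in> verts G" using \<open>x \<in> set vs\<close> c(5) TV by auto
    ultimately show "x \<in> C" using reach aT TV unfolding C_def reach_in_def by auto
  qed
  then have "has_cycle_in G ?E C" unfolding has_cycle_in_def using c insE
    by (intro exI[of _ vs] exI[of _ es]) auto
  then show ?thesis using Cc CT by blast
qed

lemma cyc4_imp_CT:
  assumes cub: "cubic G" and cy: "cyc4_edge_connected G" shows "CT G"
  unfolding CT_def
proof (intro allI impI)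
  fix S assume SV: "S \<subseteq> verts G" and c3: "card (cutE G S) \<le> 3"
  have G: "multigraph G" and deg: "\<And>v. v \<in> verts G \<Longrightarrow> card (incident G v) = 3"
    using cub unfolding cubic_def by auto
  show "card S \<le> 1 \<or> card (verts G - S) \<le> 1"
  proof (rule ccontr)
    assume "\<not> ?thesis"
    then have s2: "2 \<le> card S" "2 \<le> card (verts G - S)" by auto
    have cy1: "has_cycle_in G (inside G S) S"
      using side_cycle[OF G SV _ s2(1) c3] deg SV by blast
    have cy2: "has_cycle_in G (inside G (verts G - S)) (verts G - S)"
      using side_cycle[OF G _ _ s2(2)] deg c3 cut_compl[OF G SV] by auto
    obtain C1 where C1: "C1 \<in> components_in G (edges G - cutE G S)" "C1 \<subseteq> S"
      "has_cycle_in G (edges G - cutE G S) C1" using comp_cycle[OF G SV cy1] by blast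
    obtain C2 where C2: "C2 \<in> components_in G (edges G - cutE G S)" "C2 \<subseteq> verts G - S"
      "has_cycle_in G (edges G - cutE G S) C2" using comp_cycle[OF G _ cy2] cut_compl[OF G SV] by auto
    have fV: "finite (verts G)" using G unfolding multigraph_def by auto
    have "C1 \<noteq> {}" using cycle_card[OF C1(3)] finite_subset[OF comp_sub[OF C1(1)] fV] by auto
    then have "C1 \<noteq> C2" using C1(2) C2(2) by auto
    moreover have "cutE G S \<subseteq> edges G" unfolding cutE_def by auto
    ultimately have "cyclic_cut G (cutE G S)" unfolding cyclic_cut_def using C1 C2 by blast
    then show False using cy c3 unfolding cyc4_edge_connected_def by auto
  qed
qed


definition pe :: "nat \<Rightarrow> nat \<Rightarrow> nat" where "pe v i = prod_encode (v, i)"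

lemma pe_inj[simp]: "pe v i = pe w j \<longleftrightarrow> v = w \<and> i = j"
  unfolding pe_def using prod_encode_eq by auto

definition sc :: "nat \<Rightarrow> nat \<Rightarrow> nat" where "sc k i = (if Suc i = k then 0 else Suc i)"
definition pr :: "nat \<Rightarrow> nat \<Rightarrow> nat" where "pr k i = (if i = 0 then k - 1 else i - 1)"

lemma sc_lt: "i < k \<Longrightarrow> sc k i < k" unfolding sc_def by auto
lemma pr_lt: "i < k \<Longrightarrow> pr k i < k" unfolding pr_def by auto
lemma sc_pr: "i < k \<Longrightarrow> j < k \<Longrightarrow> sc k j = i \<longleftrightarrow> j = pr k i"
  unfolding sc_def pr_def by auto
lemma sc_neq: "2 \<le> k \<Longrightarrow> i < k \<Longrightarrow> sc k i \<noteq> i" unfolding sc_def by auto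
lemma pr_neq: "2 \<le> k \<Longrightarrow> i < k \<Longrightarrow> pr k i \<noteq> i" unfolding pr_def by auto

definition neck :: "mgraph \<Rightarrow> nat \<Rightarrow> nat \<Rightarrow> nat \<Rightarrow> nat \<Rightarrow> nat \<Rightarrow> nat \<Rightarrow> nat \<Rightarrow> mgraph" where
  "neck G k x1 y1 x2 y2 e1 e2 =
    ((\<lambda>(v,i). pe v i) ` (verts G \<times> {..<k}),
     (\<lambda>(f,i). pe f i) ` (edges G \<times> {..<k}),
     (\<lambda>n. case prod_decode n of (f,i) \<Rightarrow>
        if f = e1 then {pe y1 i, pe x1 (sc k i)}
        else if f = e2 then {pe y2 i, pe x2 (sc k i)}
        else (\<lambda>v. pe v i) ` ends G f))"

locale necklace =
  fixes G :: mgraph and k :: nat and x1 y1 x2 y2 e1 e2 :: nat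
  assumes cub: "cubic G" and ct: "CT G" and k2: "2 \<le> k"
    and e1E: "e1 \<in> edges G" and e1e: "ends G e1 = {x1,y1}"
    and e2E: "e2 \<in> edges G" and e2e: "ends G e2 = {x2,y2}"
    and dst: "x1 \<noteq> y1" "x1 \<noteq> x2" "x1 \<noteq> y2" "y1 \<noteq> x2" "y1 \<noteq> y2" "x2 \<noteq> y2"
begin

abbreviation "H \<equiv> neck G k x1 y1 x2 y2 e1 e2"

lemma G: "multigraph G" using cub unfolding cubic_def by auto
lemma deg: "v \<in> verts G \<Longrightarrow> card (incident G v) = 3" using cub unfolding cubic_def by auto
lemma fV: "finite (verts G)" and fE: "finite (edges G)" using G unfolding multigraph_def by auto
lemma e12: "e1 \<noteq> e2" using e1e e2e dst by (auto simp: doubleton_eq_iff)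
lemma ports: "x1 \<in> verts G" "y1 \<in> verts G" "x2 \<in> verts G" "y2 \<in> verts G"
  using G e1E e1e e2E e2e unfolding multigraph_def by auto

lemma Hv: "verts H = (\<lambda>(v,i). pe v i) ` (verts G \<times> {..<k})"
  unfolding neck_def verts_def by simp
lemma He: "edges H = (\<lambda>(f,i). pe f i) ` (edges G \<times> {..<k})"
  unfolding neck_def edges_def by simp
lemma Hv_iff: "pe v i \<in> verts H \<longleftrightarrow> v \<in> verts G \<and> i < k"
  unfolding Hv by auto
lemma He_iff: "pe f i \<in> edges H \<longleftrightarrow> f \<in> edges G \<and> i < k"
  unfolding He by auto
lemma Hends: "ends H (pe f i) = (if f = e1 then {pe y1 i, pe x1 (sc k i)}
        else if f = e2 then {pe y2 i, pe x2 (sc k i)}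
        else (\<lambda>v. pe v i) ` ends G f)"
  unfolding neck_def ends_def pe_def by simp
lemma Hends_int: "f \<noteq> e1 \<Longrightarrow> f \<noteq> e2 \<Longrightarrow> ends H (pe f i) = (\<lambda>v. pe v i) ` ends G f"
  using Hends by simp

lemma H_ends_ok:
  assumes n: "n \<in> edges H" shows "ends H n \<subseteq> verts H \<and> card (ends H n) = 2"
proof -
  obtain f i where fi: "n = pe f i" "f \<in> edges G" "i < k" using n unfolding He by auto
  have sk: "sc k i < k" using sc_lt[OF fi(3)] .
  show "ends H n \<subseteq> verts H \<and> card (ends H n) = 2"
  proof (cases "f = e1")
    case True
    then have "ends H n = {pe y1 i, pe x1 (sc k i)}" using fi Hends by simp
    moreover have "pe y1 i \<noteq> pe x1 (sc k i)" using dst by simp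
    ultimately show ?thesis using ports fi(3) sk Hv_iff by simp
  next
    case f1: False
    show ?thesis
    proof (cases "f = e2")
      case True
      then have "ends H n = {pe y2 i, pe x2 (sc k i)}" using fi Hends f1 by simp
      moreover have "pe y2 i \<noteq> pe x2 (sc k i)" using dst by simp
      ultimately show ?thesis using ports fi(3) sk Hv_iff by simp
    next
      case False
      obtain a b where ab: "ends G f = {a,b}" "a \<noteq> b" "a \<in> verts G" "b \<in> verts G"
        using ends2[OF G fi(2)] by metis
      have "ends H n = {pe a i, pe b i}" using fi Hends_int[OF f1 False] ab by simp
      moreover have "pe a i \<noteq> pe b i" using ab by simp
      ultimately show ?thesis using ab fi(3) Hv_iff by simp
    qed
  qed
qed

lemma H_multi: "multigraph H"
  unfolding multigraph_def using H_ends_ok fV fE unfolding Hv He by simp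

definition tau :: "nat \<Rightarrow> nat \<Rightarrow> nat \<Rightarrow> nat" where
  "tau u f i = (if (f = e1 \<and> u = x1) \<or> (f = e2 \<and> u = x2) then pr k i else i)"

lemma He1: "ends H (pe e1 j) = {pe y1 j, pe x1 (sc k j)}" by (simp add: Hends)
lemma He2: "ends H (pe e2 j) = {pe y2 j, pe x2 (sc k j)}" using e12 by (simp add: Hends)

lemma tau_o: "\<not> ((f = e1 \<and> u = x1) \<or> (f = e2 \<and> u = x2)) \<Longrightarrow> tau u f i = i"
  unfolding tau_def by auto
lemma tau_1: "tau x1 e1 i = pr k i" unfolding tau_def by simp
lemma tau_2: "tau x2 e2 i = pr k i" unfolding tau_def by simp

lemma inc_H_sub1:
  assumes u: "u \<in> verts G" and i: "i < k" and n: "n \<in> incident H (pe u i)"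
  shows "n \<in> (\<lambda>f. pe f (tau u f i)) ` incident G u"
proof -
  obtain f j where fj: "n = pe f j" "f \<in> edges G" "j < k" using n unfolding incident_def He by auto
  have m: "pe u i \<in> ends H (pe f j)" using n fj unfolding incident_def by auto
  show ?thesis
  proof (cases "f = e1")
    case True
    then have "(u = y1 \<and> i = j) \<or> (u = x1 \<and> i = sc k j)" using m He1 by auto
    then show ?thesis
    proof
      assume a: "u = y1 \<and> i = j"
      then have "tau u f i = j" using tau_o[of f u i] True a dst by auto
      moreover have "f \<in> incident G u" using True a e1E e1e unfolding incident_def by auto
      ultimately show ?thesis using fj(1) by blast
    next
      assume a: "u = x1 \<and> i = sc k j"
      then have "j = pr k i" using sc_pr[OF i fj(3)] by simp
      then have "tau u f i = j" using tau_1 True a by simp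
      moreover have "f \<in> incident G u" using True a e1E e1e unfolding incident_def by auto
      ultimately show ?thesis using fj(1) by blast
    qed
  next
    case f1: False
    show ?thesis
    proof (cases "f = e2")
      case True
      then have "(u = y2 \<and> i = j) \<or> (u = x2 \<and> i = sc k j)" using m He2 by auto
      then show ?thesis
      proof
        assume a: "u = y2 \<and> i = j"
        then have "tau u f i = j" using tau_o[of f u i] True a dst e12 by auto
        moreover have "f \<in> incident G u" using True a e2E e2e unfolding incident_def by auto
        ultimately show ?thesis using fj(1) by blast
      next
        assume a: "u = x2 \<and> i = sc k j"
        then have "j = pr k i" using sc_pr[OF i fj(3)] by simp
        then have "tau u f i = j" using tau_2 True a by simp
        moreover have "f \<in> incident G u" using True a e2E e2e unfolding incident_def by auto
        ultimately show ?thesis using fj(1) by blast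
      qed
    next
      case False
      have "ends H (pe f j) = (\<lambda>v. pe v j) ` ends G f" using Hends_int[OF f1 False] .
      then have a: "u \<in> ends G f" "i = j" using m by auto
      then have "tau u f i = j" using tau_o[of f u i] f1 False by auto
      moreover have "f \<in> incident G u" using a fj unfolding incident_def by auto
      ultimately show ?thesis using fj(1) by blast
    qed
  qed
qed

lemma inc_H_sub2:
  assumes u: "u \<in> verts G" and i: "i < k" and f: "f \<in> incident G u"
  shows "pe f (tau u f i) \<in> incident H (pe u i)"
proof -
  have fE: "f \<in> edges G" and uf: "u \<in> ends G f" using f unfolding incident_def by auto
  have tk: "tau u f i < k" unfolding tau_def using i pr_lt by auto
  have inE: "pe f (tau u f i) \<in> edges H" using fE tk He_iff by simp
  have "pe u i \<in> ends H (pe f (tau u f i))"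
  proof (cases "f = e1")
    case True
    then have "u = x1 \<or> u = y1" using uf e1e by auto
    then show ?thesis
    proof
      assume a: "u = x1"
      have "sc k (pr k i) = i" using sc_pr[OF i pr_lt[OF i]] by simp
      then show ?thesis using a True tau_1 He1 by simp
    next
      assume a: "u = y1"
      then have "tau u f i = i" using tau_o[of f u i] True a dst by auto
      then show ?thesis using a True He1 by simp
    qed
  next
    case f1: False
    show ?thesis
    proof (cases "f = e2")
      case True
      then have "u = x2 \<or> u = y2" using uf e2e by auto
      then show ?thesis
      proof
        assume a: "u = x2"
        have "sc k (pr k i) = i" using sc_pr[OF i pr_lt[OF i]] by simp
        then show ?thesis using a True tau_2 He2 by simp
      next
        assume a: "u = y2"
        then have "tau u f i = i" using tau_o[of f u i] True a dst e12 by auto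
        then show ?thesis using a True He2 by simp
      qed
    next
      case False
      then have "tau u f i = i" using tau_o[of f u i] f1 False by auto
      then show ?thesis using Hends_int[OF f1 False] uf by simp
    qed
  qed
  then show ?thesis using inE unfolding incident_def by simp
qed

lemma inc_H:
  assumes u: "u \<in> verts G" and i: "i < k"
  shows "incident H (pe u i) = (\<lambda>f. pe f (tau u f i)) ` incident G u"
proof (rule equalityI)
  show "incident H (pe u i) \<subseteq> (\<lambda>f. pe f (tau u f i)) ` incident G u"
    using inc_H_sub1[OF u i] by (rule subsetI)
  show "(\<lambda>f. pe f (tau u f i)) ` incident G u \<subseteq> incident H (pe u i)"
    using inc_H_sub2[OF u i] by (rule image_subsetI)
qed

lemma H_cubic: "cubic H"
  unfolding cubic_def
proof (intro conjI ballI)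
  show "multigraph H" by (rule H_multi)
  fix n assume "n \<in> verts H"
  then obtain u i where ui: "n = pe u i" "u \<in> verts G" "i < k" unfolding Hv by auto
  have "inj_on (\<lambda>f. pe f (tau u f i)) (incident G u)" by (auto intro!: inj_onI)
  then have "card (incident H n) = card (incident G u)" using ui inc_H[OF ui(2,3)] by (simp add: card_image)
  then show "card (incident H n) = 3" using deg[OF ui(2)] by simp
qed

lemma H_card: "card (verts H) = card (verts G) * k"
proof -
  have "inj_on (\<lambda>(v,i). pe v i) (verts G \<times> {..<k})" by (auto intro!: inj_onI)
  then show ?thesis unfolding Hv by (simp add: card_image card_cartesian_product)
qed

end


lemma lin_trans:
  assumes "a < m" "b < m" "a \<in> A" "b \<notin> A"
  shows "\<exists>t. Suc t < m \<and> (t \<in> A \<longleftrightarrow> Suc t \<notin> A)"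
proof (rule ccontr)
  assume "\<not> ?thesis"
  then have st: "\<And>t. Suc t < m \<Longrightarrow> (t \<in> A \<longleftrightarrow> Suc t \<in> A)" by blast
  have "\<And>t. t < m \<Longrightarrow> (t \<in> A \<longleftrightarrow> 0 \<in> A)"
  proof -
    fix t show "t < m \<Longrightarrow> (t \<in> A \<longleftrightarrow> 0 \<in> A)"
      by (induction t) (use st in auto)
  qed
  then show False using assms by blast
qed

lemma sc_mod: "x < k \<Longrightarrow> sc k x = Suc x mod k"
  unfolding sc_def by auto

lemma ring_closed:
  assumes k: "0 < k" and T: "T \<subseteq> {..<k}" and a: "a \<in> T" and cl: "\<And>i. i \<in> T \<Longrightarrow> sc k i \<in> T"
  shows "T = {..<k}"
proof -
  have ak: "a < k" using a T by auto
  have "(a + n) mod k \<in> T" for n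
  proof (induction n)
    case 0 then show ?case using a ak by simp
  next
    case (Suc n)
    have "sc k ((a + n) mod k) = Suc ((a + n) mod k) mod k" using sc_mod k by simp
    also have "\<dots> = (a + Suc n) mod k" by (simp add: mod_Suc_eq)
    finally show ?case using cl[OF Suc] by simp
  qed
  moreover have "j = (a + (j + k - a)) mod k" if "j < k" for j
  proof -
    have "a + (j + k - a) = j + k" using ak by simp
    then show ?thesis using that by simp
  qed
  ultimately show ?thesis using T by (metis subsetI subset_antisym lessThan_iff)
qed

lemma ring_trans:
  assumes k: "0 < k" and T: "T \<subseteq> {..<k}" and ne: "T \<noteq> {}" and nf: "T \<noteq> {..<k}"
  shows "\<exists>i\<in>T. sc k i \<notin> T"
  using ring_closed[OF k T] ne nf by blast

definition rot :: "nat \<Rightarrow> nat \<Rightarrow> nat \<Rightarrow> nat" where "rot k i0 t = (i0 + 1 + t) mod k"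

lemma rot_lt: "0 < k \<Longrightarrow> rot k i0 t < k" unfolding rot_def by simp
lemma rot_ne: assumes "i0 < k" "t < k - 1" shows "rot k i0 t \<noteq> i0"
proof -
  have "(i0 + 1 + t) mod k \<noteq> i0"
  proof (cases "i0 + 1 + t < k")
    case True then show ?thesis by simp
  next
    case False
    then have "(i0 + 1 + t) mod k = i0 + 1 + t - k" using assms by (simp add: le_mod_geq)
    moreover have "i0 + 1 + t - k \<noteq> i0" using assms False by linarith
    ultimately show ?thesis by simp
  qed
  then show ?thesis unfolding rot_def .
qed
lemma rot_sc: "0 < k \<Longrightarrow> sc k (rot k i0 t) = rot k i0 (Suc t)"
  unfolding rot_def using sc_mod[of "(i0 + 1 + t) mod k" k] by (simp add: mod_Suc_eq)
lemma rot_surj: assumes "i0 < k" "j < k" "j \<noteq> i0" shows "\<exists>t < k - 1. rot k i0 t = j"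
proof (cases "i0 < j")
  case True
  then show ?thesis using assms unfolding rot_def by (intro exI[of _ "j - i0 - 1"]) auto
next
  case False
  then have "i0 + 1 + (j + k - i0 - 1) = j + k" using assms by simp
  then show ?thesis using assms False unfolding rot_def by (intro exI[of _ "j + k - i0 - 1"]) auto
qed


context necklace begin

definition Si :: "nat set \<Rightarrow> nat \<Rightarrow> nat set" where "Si S i = {v \<in> verts G. pe v i \<in> S}"

lemma Si_sub: "Si S i \<subseteq> verts G" unfolding Si_def by auto

lemma cutH_int:
  assumes i: "i < k" and f: "f \<in> cutE G (Si S i)" and f1: "f \<noteq> e1" and f2: "f \<noteq> e2"
  shows "pe f i \<in> cutE H S"
proof -
  have fE: "f \<in> edges G" using f unfolding cutE_def by auto
  have eV: "ends G f \<subseteq> verts G" using G fE unfolding multigraph_def by auto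
  have eq: "ends H (pe f i) = (\<lambda>v. pe v i) ` ends G f" using Hends_int[OF f1 f2] .
  have mem: "pe v i \<in> S \<longleftrightarrow> v \<in> Si S i" if "v \<in> ends G f" for v using that eV unfolding Si_def by auto
  have "pe f i \<in> edges H" using fE i He_iff by simp
  moreover have "ends H (pe f i) \<inter> S \<noteq> {}" using f mem unfolding eq cutE_def by blast
  moreover have "\<not> ends H (pe f i) \<subseteq> S" using f mem unfolding eq cutE_def by blast
  ultimately show ?thesis unfolding cutE_def by blast
qed

lemma cutH_e1:
  assumes j: "j < k"
  shows "pe e1 j \<in> cutE H S \<longleftrightarrow> ((y1 \<in> Si S j) \<noteq> (x1 \<in> Si S (sc k j)))"
proof -
  have "pe e1 j \<in> edges H" using e1E j He_iff by simp
  moreover have "pe y1 j \<noteq> pe x1 (sc k j)" using dst by simp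
  moreover have "ends H (pe e1 j) = {pe y1 j, pe x1 (sc k j)}" by (rule He1)
  moreover have "sc k j < k" using sc_lt[OF j] .
  ultimately show ?thesis unfolding cutE_def Si_def using ports j by auto
qed

lemma cutH_e2:
  assumes j: "j < k"
  shows "pe e2 j \<in> cutE H S \<longleftrightarrow> ((y2 \<in> Si S j) \<noteq> (x2 \<in> Si S (sc k j)))"
proof -
  have "pe e2 j \<in> edges H" using e2E j He_iff by simp
  moreover have "pe y2 j \<noteq> pe x2 (sc k j)" using dst by simp
  moreover have "ends H (pe e2 j) = {pe y2 j, pe x2 (sc k j)}" by (rule He2)
  moreover have "sc k j < k" using sc_lt[OF j] .
  ultimately show ?thesis unfolding cutE_def Si_def using ports j by auto
qed

definition Iset :: "nat set \<Rightarrow> nat \<Rightarrow> nat set" where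
  "Iset S i = (\<lambda>f. pe f i) ` (cutE G (Si S i) - {e1,e2})"

lemma Iset_sub: "i < k \<Longrightarrow> Iset S i \<subseteq> cutE H S"
  unfolding Iset_def using cutH_int by auto

lemma Iset_card: "card (Iset S i) = card (cutE G (Si S i) - {e1,e2})"
  unfolding Iset_def by (rule card_image) (auto intro!: inj_onI)

lemma Iset_disj: "i \<noteq> j \<Longrightarrow> Iset S i \<inter> Iset S j = {}" unfolding Iset_def by auto

lemma fcutH: "finite (cutE H S)"
  using H_multi unfolding multigraph_def cutE_def by auto

lemma cut_single: assumes v: "v \<in> verts G" shows "cutE G {v} = incident G v"
proof
  show "cutE G {v} \<subseteq> incident G v" unfolding cutE_def incident_def by auto
  show "incident G v \<subseteq> cutE G {v}"
  proof
    fix e assume e: "e \<in> incident G v"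
    then have eE: "e \<in> edges G" "v \<in> ends G e" unfolding incident_def by auto
    obtain a b where "ends G e = {a,b}" "a \<noteq> b" using ends2[OF G eE(1)] by metis
    then have "\<not> ends G e \<subseteq> {v}" by auto
    then show "e \<in> cutE G {v}" using eE unfolding cutE_def by auto
  qed
qed

lemma card_split: "card A \<le> card (A - B) + card (A \<inter> B)"
proof -
  have "A = (A - B) \<union> (A \<inter> B)" by auto
  then show ?thesis by (metis card_Un_le)
qed

lemma card_single: assumes "finite A" "A \<noteq> {}" "card A \<le> 1" obtains v where "A = {v}"
proof -
  have "card A = 1" using assms by (metis One_nat_def card_gt_0_iff le_antisym less_eq_Suc_le)
  then show ?thesis using that card_1_singletonE by blast
qed

lemma inc_minus: assumes v: "v \<in> verts G" shows "2 \<le> card (incident G v - {e1,e2})"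
proof -
  have nb: "\<not> (e1 \<in> incident G v \<and> e2 \<in> incident G v)"
  proof
    assume "e1 \<in> incident G v \<and> e2 \<in> incident G v"
    then have "v \<in> ends G e1" "v \<in> ends G e2" unfolding incident_def by auto
    then show False using e1e e2e dst by auto
  qed
  have le1: "card (incident G v \<inter> {e1,e2}) \<le> 1"
  proof (cases "e1 \<in> incident G v")
    case True
    then have "incident G v \<inter> {e1,e2} \<subseteq> {e1}" using nb by auto
    then show ?thesis by (metis card.empty card_insert_disjoint card_mono finite.emptyI finite.insertI empty_iff One_nat_def)
  next
    case False
    then have "incident G v \<inter> {e1,e2} \<subseteq> {e2}" by auto
    then show ?thesis by (metis card.empty card_insert_disjoint card_mono finite.emptyI finite.insertI empty_iff One_nat_def)
  qed
  have "card (incident G v) \<le> card (incident G v - {e1,e2}) + card (incident G v \<inter> {e1,e2})"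
    by (rule card_split)
  then show ?thesis using deg[OF v] le1 by simp
qed

lemma mixed_cost:
  assumes R: "R \<subseteq> verts G" "R \<noteq> {}" "R \<noteq> verts G"
  shows "2 \<le> card (cutE G R - {e1,e2})"
proof (cases "4 \<le> card (cutE G R)")
  case True
  have "card (cutE G R) \<le> card (cutE G R - {e1,e2}) + card (cutE G R \<inter> {e1,e2})"
    by (rule card_split)
  moreover have "card (cutE G R \<inter> {e1,e2}) \<le> card {e1,e2}" by (rule card_mono) auto
  moreover have "card {e1,e2} \<le> 2" by (simp add: card_insert_le_m1)
  ultimately show ?thesis using True by simp
next
  case False
  then have "card R \<le> 1 \<or> card (verts G - R) \<le> 1" using ct R(1) unfolding CT_def by auto
  then obtain v where v: "v \<in> verts G" "cutE G R = cutE G {v}"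
  proof
    assume "card R \<le> 1"
    moreover have "finite R" using R(1) fV finite_subset by blast
    ultimately obtain v where "R = {v}" using R(2) card_single by blast
    then show ?thesis using that R(1) by auto
  next
    assume a: "card (verts G - R) \<le> 1"
    have ne: "verts G - R \<noteq> {}" using R by auto
    obtain v where "verts G - R = {v}" using a ne fV card_single[of "verts G - R"] by blast
    then show ?thesis using that cut_compl[OF G R(1)] by auto
  qed
  then show ?thesis using inc_minus cut_single by simp
qed

end


context necklace begin

lemma S_repr: assumes S: "S \<subseteq> verts H" shows "S = (\<Union>j<k. (\<lambda>v. pe v j) ` Si S j)"
proof
  show "S \<subseteq> (\<Union>j<k. (\<lambda>v. pe v j) ` Si S j)"
  proof
    fix n assume n: "n \<in> S"
    then obtain v j where "n = pe v j" "v \<in> verts G" "j < k" using S unfolding Hv by auto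
    then show "n \<in> (\<Union>j<k. (\<lambda>v. pe v j) ` Si S j)" using n unfolding Si_def by auto
  qed
  show "(\<Union>j<k. (\<lambda>v. pe v j) ` Si S j) \<subseteq> S" unfolding Si_def by auto
qed

lemma Si_compl: assumes j: "j < k" shows "Si (verts H - S) j = verts G - Si S j"
  unfolding Si_def using j Hv_iff by auto

abbreviation mixed :: "nat set \<Rightarrow> nat \<Rightarrow> bool" where
  "mixed S i \<equiv> Si S i \<noteq> {} \<and> Si S i \<noteq> verts G"

lemma Iset_ge2: "mixed S i \<Longrightarrow> 2 \<le> card (Iset S i)"
  unfolding Iset_card using mixed_cost Si_sub by blast

lemma mixed_unique:
  assumes c3: "card (cutE H S) \<le> 3" and i: "i < k" and j: "j < k" and mi: "mixed S i" and mj: "mixed S j"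
  shows "i = j"
proof (rule ccontr)
  assume ij: "i \<noteq> j"
  have "card (Iset S i \<union> Iset S j) = card (Iset S i) + card (Iset S j)"
    using Iset_disj[OF ij] finite_subset[OF Iset_sub[OF i] fcutH] finite_subset[OF Iset_sub[OF j] fcutH]
    by (intro card_Un_disjoint) auto
  moreover have "card (Iset S i \<union> Iset S j) \<le> card (cutE H S)"
    using fcutH Iset_sub[OF i] Iset_sub[OF j] by (intro card_mono) auto
  ultimately show False using Iset_ge2[OF mi] Iset_ge2[OF mj] c3 by simp
qed

definition cport :: "nat \<Rightarrow> nat \<Rightarrow> nat" where
  "cport i0 p = (if p = x1 then pe e1 (pr k i0) else if p = y1 then pe e1 i0
     else if p = x2 then pe e2 (pr k i0) else pe e2 i0)"

lemma others_empty:
  assumes S: "S \<subseteq> verts H" and c3: "card (cutE H S) \<le> 3" and i0: "i0 < k" and mi: "mixed S i0"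
    and oth: "\<And>j. j < k \<Longrightarrow> j \<noteq> i0 \<Longrightarrow> Si S j = {}"
  shows "card S \<le> 1"
proof -
  define R where "R = Si S i0"
  define P where "P = {x1,y1,x2,y2}"
  have RV: "R \<subseteq> verts G" unfolding R_def by (rule Si_sub)
  have fR: "finite R" using RV fV finite_subset by blast
  have Seq: "S = (\<lambda>v. pe v i0) ` R"
  proof -
    have "S = (\<Union>j<k. (\<lambda>v. pe v j) ` Si S j)" by (rule S_repr[OF S])
    also have "\<dots> = (\<lambda>v. pe v i0) ` R" unfolding R_def using oth i0 by auto
    finally show ?thesis .
  qed
  have pk: "pr k i0 < k" "pr k i0 \<noteq> i0" "sc k (pr k i0) = i0" "sc k i0 < k" "sc k i0 \<noteq> i0"
    using pr_lt[OF i0] pr_neq[OF k2 i0] sc_pr[OF i0 pr_lt[OF i0]] sc_lt[OF i0] sc_neq[OF k2 i0] by auto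
  have Spr: "Si S (pr k i0) = {}" "Si S (sc k i0) = {}" using oth pk by auto
  have cin: "cport i0 p \<in> cutE H S" if p: "p \<in> P \<inter> R" for p
  proof -
    have "p = x1 \<or> p = y1 \<or> p = x2 \<or> p = y2" using p unfolding P_def by auto
    then show ?thesis
    proof (elim disjE)
      assume a: "p = x1"
      then show ?thesis using cutH_e1[OF pk(1)] pk(3) Spr p unfolding cport_def R_def by simp
    next
      assume a: "p = y1"
      then show ?thesis using cutH_e1[OF i0] Spr p dst unfolding cport_def R_def by simp
    next
      assume a: "p = x2"
      then show ?thesis using cutH_e2[OF pk(1)] pk(3) Spr p dst unfolding cport_def R_def by simp
    next
      assume a: "p = y2"
      then show ?thesis using cutH_e2[OF i0] Spr p dst unfolding cport_def R_def by simp
    qed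
  qed
  have cinj: "inj_on (cport i0) P"
    unfolding inj_on_def P_def cport_def using dst e12 pk(2) by auto
  define Conn where "Conn = cport i0 ` (P \<inter> R)"
  have cConn: "card Conn = card (P \<inter> R)" unfolding Conn_def
    by (rule card_image) (rule inj_on_subset[OF cinj], auto)
  have disj: "Iset S i0 \<inter> Conn = {}"
    unfolding Iset_def Conn_def cport_def by auto
  have sub: "Iset S i0 \<union> Conn \<subseteq> cutE H S" using Iset_sub[OF i0] cin unfolding Conn_def by auto
  have "card (Iset S i0) + card (P \<inter> R) \<le> card (cutE H S)"
  proof -
    have "card (Iset S i0 \<union> Conn) = card (Iset S i0) + card Conn"
      using disj finite_subset[OF sub fcutH] by (intro card_Un_disjoint) auto
    moreover have "card (Iset S i0 \<union> Conn) \<le> card (cutE H S)" using sub fcutH by (rule card_mono[rotated])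
    ultimately show ?thesis using cConn by simp
  qed
  then have tot: "card (cutE G R - {e1,e2}) + card (P \<inter> R) \<le> 3" using c3 Iset_card[of S i0] unfolding R_def by simp
  define g where "g e = (if e = e1 then (if x1 \<in> R then x1 else y1) else (if x2 \<in> R then x2 else y2))" for e
  have "card (cutE G R \<inter> {e1,e2}) \<le> card (P \<inter> R)"
  proof (rule card_inj_on_le)
    show "inj_on g (cutE G R \<inter> {e1, e2})" unfolding inj_on_def g_def using dst e12 by auto
    show "g ` (cutE G R \<inter> {e1, e2}) \<subseteq> P \<inter> R"
    proof
      fix p assume "p \<in> g ` (cutE G R \<inter> {e1, e2})"
      then obtain e where e: "e \<in> cutE G R" "e = e1 \<or> e = e2" "p = g e" by auto
      from e(2) show "p \<in> P \<inter> R"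
      proof
        assume "e = e1"
        then have "x1 \<in> R \<or> y1 \<in> R" using e(1) e1e unfolding cutE_def by auto
        then show ?thesis using e \<open>e = e1\<close> unfolding g_def P_def by auto
      next
        assume "e = e2"
        then have "x2 \<in> R \<or> y2 \<in> R" using e(1) e2e unfolding cutE_def by auto
        then show ?thesis using e \<open>e = e2\<close> e12 unfolding g_def P_def by auto
      qed
    qed
    show "finite (P \<inter> R)" unfolding P_def by simp
  qed
  then have "card (cutE G R) \<le> 3" using card_split[of "cutE G R" "{e1,e2}"] tot by simp
  then have "card R \<le> 1 \<or> card (verts G - R) \<le> 1" using ct RV unfolding CT_def by blast
  then show ?thesis
  proof
    assume "card R \<le> 1"
    then show ?thesis unfolding Seq using card_image_le[OF fR, of "\<lambda>v. pe v i0"] by simp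
  next
    assume a: "card (verts G - R) \<le> 1"
    have ne: "verts G - R \<noteq> {}" using mi RV unfolding R_def by auto
    obtain v where v: "verts G - R = {v}" using card_single[OF _ ne a] fV by blast
    have "P - {v} \<subseteq> P \<inter> R" using v ports unfolding P_def by auto
    then have "card (P - {v}) \<le> card (P \<inter> R)" by (intro card_mono) (auto simp: P_def)
    moreover have "card P = 4" unfolding P_def using dst by simp
    moreover have "card P \<le> card (P - {v}) + 1"
    proof -
      have "card (P \<inter> {v}) \<le> card {v}" by (rule card_mono) auto
      then show ?thesis using card_split[of P "{v}"] by simp
    qed
    moreover have "2 \<le> card (cutE G R - {e1,e2})" using mixed_cost RV mi unfolding R_def by blast
    ultimately show ?thesis using tot by simp
  qed
qed

end


context necklace begin

lemma CT_H: "CT H"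
  unfolding CT_def
proof (intro allI impI)
  fix S assume S: "S \<subseteq> verts H" and c3: "card (cutE H S) \<le> 3"
  show "card S \<le> 1 \<or> card (verts H - S) \<le> 1"
  proof (cases "\<exists>i0<k. mixed S i0")
    case True
    then obtain i0 where i0: "i0 < k" "mixed S i0" by blast
    have Vne: "verts G \<noteq> {}" using i0(2) Si_sub by blast
    have oth: "Si S j = {} \<or> Si S j = verts G" if "j < k" "j \<noteq> i0" for j
      using mixed_unique[OF c3 that(1) i0(1) _ i0(2)] that(2) by blast
    have nb: "\<not> ((\<exists>j1<k. j1 \<noteq> i0 \<and> Si S j1 = verts G) \<and> (\<exists>j2<k. j2 \<noteq> i0 \<and> Si S j2 = {}))"
    proof
      assume "(\<exists>j1<k. j1 \<noteq> i0 \<and> Si S j1 = verts G) \<and> (\<exists>j2<k. j2 \<noteq> i0 \<and> Si S j2 = {})"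
      then obtain j1 j2 where j: "j1 < k" "j1 \<noteq> i0" "Si S j1 = verts G" "j2 < k" "j2 \<noteq> i0" "Si S j2 = {}"
        by blast
      obtain t1 where t1: "t1 < k - 1" "rot k i0 t1 = j1" using rot_surj[OF i0(1) j(1,2)] by blast
      obtain t2 where t2: "t2 < k - 1" "rot k i0 t2 = j2" using rot_surj[OF i0(1) j(4,5)] by blast
      define A where "A = {t. Si S (rot k i0 t) = verts G}"
      have "t1 \<in> A" "t2 \<notin> A" unfolding A_def using t1 t2 j Vne by auto
      then obtain t where t: "Suc t < k - 1" "t \<in> A \<longleftrightarrow> Suc t \<notin> A"
        using lin_trans[OF t1(1) t2(1)] by blast
      define jj where "jj = rot k i0 t"
      have k0: "0 < k" using k2 by simp
      have jj: "jj < k" "jj \<noteq> i0" "sc k jj < k" "sc k jj \<noteq> i0" "sc k jj = rot k i0 (Suc t)"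
        unfolding jj_def using rot_lt[OF k0] rot_ne[OF i0(1)] t(1) rot_sc[OF k0] by auto
      have o1: "Si S jj = {} \<or> Si S jj = verts G" using oth jj by blast
      have o2: "Si S (sc k jj) = {} \<or> Si S (sc k jj) = verts G" using oth jj by blast
      have dif: "Si S jj = verts G \<longleftrightarrow> Si S (sc k jj) \<noteq> verts G"
        using t(2) jj(5) unfolding A_def jj_def by simp
      have "(y1 \<in> Si S jj) \<noteq> (x1 \<in> Si S (sc k jj))" "(y2 \<in> Si S jj) \<noteq> (x2 \<in> Si S (sc k jj))"
        using o1 o2 dif ports Vne by auto
      then have cc: "pe e1 jj \<in> cutE H S" "pe e2 jj \<in> cutE H S" using cutH_e1[OF jj(1)] cutH_e2[OF jj(1)] by auto
      have sub: "Iset S i0 \<union> {pe e1 jj, pe e2 jj} \<subseteq> cutE H S" using Iset_sub[OF i0(1)] cc by auto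
      have disj: "Iset S i0 \<inter> {pe e1 jj, pe e2 jj} = {}" unfolding Iset_def by auto
      have "card (Iset S i0 \<union> {pe e1 jj, pe e2 jj}) = card (Iset S i0) + card {pe e1 jj, pe e2 jj}"
        using disj finite_subset[OF sub fcutH] by (intro card_Un_disjoint) auto
      moreover have "card {pe e1 jj, pe e2 jj} = 2" using e12 by simp
      moreover have "card (Iset S i0 \<union> {pe e1 jj, pe e2 jj}) \<le> card (cutE H S)"
        using sub fcutH by (rule card_mono[rotated])
      ultimately show False using Iset_ge2[OF i0(2)] c3 by simp
    qed
    show ?thesis
    proof (cases "\<forall>j<k. j \<noteq> i0 \<longrightarrow> Si S j = {}")
      case True
      then show ?thesis using others_empty[OF S c3 i0] by blast
    next
      case False
      then have full: "\<And>j. j < k \<Longrightarrow> j \<noteq> i0 \<Longrightarrow> Si S j = verts G" using nb oth by blast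
      let ?S' = "verts H - S"
      have ce: "cutE H ?S' = cutE H S" using cut_compl[OF H_multi S] .
      have sub0: "Si S i0 \<subseteq> verts G" by (rule Si_sub)
      have m': "mixed ?S' i0" unfolding Si_compl[OF i0(1)] using i0(2) sub0 by blast
      have o': "Si ?S' j = {}" if "j < k" "j \<noteq> i0" for j using Si_compl[OF that(1)] full[OF that] by simp
      have "card ?S' \<le> 1" using others_empty[of ?S' i0] ce c3 i0(1) m' o' by auto
      then show ?thesis by blast
    qed
  next
    case False
    then have nm: "Si S j = {} \<or> Si S j = verts G" if "j < k" for j using that by blast
    define T where "T = {j. j < k \<and> Si S j = verts G}"
    have T: "T \<subseteq> {..<k}" unfolding T_def by auto
    have k0: "0 < k" using k2 by simp
    show ?thesis
    proof (cases "T = {}")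
      case True
      then have "Si S j = {}" if "j < k" for j using nm[OF that] that unfolding T_def by auto
      then have "S = {}" using S_repr[OF S] by auto
      then show ?thesis by simp
    next
      case Tne: False
      show ?thesis
      proof (cases "T = {..<k}")
        case True
        have "verts H - S = {}"
        proof -
          have "n \<in> S" if nH: "n \<in> verts H" for n
          proof -
            obtain v j where "n = pe v j" "v \<in> verts G" "j < k" using nH unfolding Hv by auto
            moreover then have "Si S j = verts G" using True unfolding T_def by auto
            ultimately show ?thesis unfolding Si_def by auto
          qed
          then show ?thesis by auto
        qed
        then have "card (verts H - S) = 0" by (metis card.empty)
        then show ?thesis by simp
      next
        case False
        obtain i where i: "i \<in> T" "sc k i \<notin> T" using ring_trans[OF k0 T Tne False] by blast
        have T2: "{..<k} - T \<subseteq> {..<k}" "{..<k} - T \<noteq> {}" "{..<k} - T \<noteq> {..<k}" using T Tne False by auto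
        obtain i' where i': "i' \<in> {..<k} - T" "sc k i' \<notin> {..<k} - T" using ring_trans[OF k0 T2] by blast
        have ik: "i < k" "i' < k" "sc k i < k" "sc k i' < k" using i i' T sc_lt by auto
        have s1: "Si S i = verts G" "Si S (sc k i) = {}" using i ik nm unfolding T_def by auto
        have s2: "Si S i' = {}" "Si S (sc k i') = verts G" using i' ik nm unfolding T_def by auto
        have "pe e1 i \<in> cutE H S" "pe e2 i \<in> cutE H S" "pe e1 i' \<in> cutE H S" "pe e2 i' \<in> cutE H S"
          using cutH_e1[OF ik(1)] cutH_e2[OF ik(1)] cutH_e1[OF ik(2)] cutH_e2[OF ik(2)] s1 s2 ports by auto
        then have sub: "{pe e1 i, pe e2 i, pe e1 i', pe e2 i'} \<subseteq> cutE H S" by auto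
        have ii: "i \<noteq> i'" using i i' by auto
        have "card {pe e1 i, pe e2 i, pe e1 i', pe e2 i'} = 4" using ii e12 by simp
        moreover have "card {pe e1 i, pe e2 i, pe e1 i', pe e2 i'} \<le> card (cutE H S)"
          using sub fcutH by (rule card_mono[rotated])
        ultimately show ?thesis using c3 by simp
      qed
    qed
  qed
qed

lemma cyc4_H: "cyc4_edge_connected H"
  by (rule CT_imp_cyc4[OF H_multi CT_H])

end


lemma poor_iff: assumes "ends X e = {u,w}"
  shows "poor_edge X c e \<longleftrightarrow> card (colors_at X c u \<union> colors_at X c w) = 3"
  using assms unfolding poor_edge_def by (auto simp: doubleton_eq_iff Un_commute)

lemma rich_iff: assumes "ends X e = {u,w}"
  shows "rich_edge X c e \<longleftrightarrow> card (colors_at X c u \<union> colors_at X c w) = 5"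
  using assms unfolding rich_edge_def by (auto simp: doubleton_eq_iff Un_commute)

lemma other_end: assumes G: "multigraph G" and e: "e \<in> incident G v"
  obtains w where "w \<noteq> v" "ends G e = {v,w}"
proof -
  have eE: "e \<in> edges G" and ve: "v \<in> ends G e" using e unfolding incident_def by auto
  obtain a b where ab: "ends G e = {a,b}" "a \<noteq> b" using ends2[OF G eE] by metis
  show ?thesis
  proof (cases "v = a")
    case True then show ?thesis using ab that[of b] by auto
  next
    case False
    then have "v = b" using ve ab by auto
    then show ?thesis using ab that[of a] by (auto simp: insert_commute)
  qed
qed

context necklace begin

lemma colors_same:
  assumes u: "u \<in> verts G" "u \<noteq> x1" "u \<noteq> y1" "u \<noteq> x2" "u \<noteq> y2" and i: "i < k"
    and cc: "\<And>f. f \<in> incident G u \<Longrightarrow> c' f = c (pe f i)"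
  shows "colors_at G c' u = colors_at H c (pe u i)"
proof -
  have t: "tau u f i = i" for f using tau_o[of f u i] u by auto
  have "colors_at H c (pe u i) = c ` (\<lambda>f. pe f i) ` incident G u"
    unfolding colors_at_def inc_H[OF u(1) i] t ..
  also have "\<dots> = c' ` incident G u" using cc by (auto simp: image_image)
  finally show ?thesis unfolding colors_at_def by simp
qed

lemma card_Q:
  assumes g: "g \<in> edges G" "ends G g = {y1,x2}"
  shows "card (incident G x1 \<union> incident G y1 \<union> incident G x2 \<union> incident G y2) \<le> 9"
proof -
  have m: "e1 \<in> incident G x1" "g \<in> incident G y1" "e2 \<in> incident G x2"
    using e1E e1e e2E e2e g unfolding incident_def by auto
  have eq: "incident G x1 \<union> incident G y1 \<union> incident G x2 \<union> incident G y2 =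
     incident G x1 \<union> (incident G y1 - {e1}) \<union> (incident G x2 - {g}) \<union> (incident G y2 - {e2})"
    using m by blast
  have fi: "finite (incident G v)" for v using fE unfolding incident_def by auto
  have c2: "card (incident G v - {e}) \<le> 2" if "v \<in> verts G" "e \<in> incident G v" for v e
    using deg[OF that(1)] card_Diff_singleton[OF that(2)] by simp
  have m2: "e1 \<in> incident G y1" "g \<in> incident G x2" "e2 \<in> incident G y2"
    using e1E e1e e2E e2e g unfolding incident_def by auto
  have u: "card (A \<union> B) \<le> card A + card B" for A B :: "nat set" by (rule card_Un_le)
  have "card (incident G x1 \<union> (incident G y1 - {e1}) \<union> (incident G x2 - {g}) \<union> (incident G y2 - {e2}))
     \<le> card (incident G x1) + card (incident G y1 - {e1}) + card (incident G x2 - {g}) + card (incident G y2 - {e2})"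
    using u[of "incident G x1" "incident G y1 - {e1}"]
      u[of "incident G x1 \<union> (incident G y1 - {e1})" "incident G x2 - {g}"]
      u[of "incident G x1 \<union> (incident G y1 - {e1}) \<union> (incident G x2 - {g})" "incident G y2 - {e2}"]
    by linarith
  also have "\<dots> \<le> 3 + 2 + 2 + 2" using deg ports c2 m2 by (intro add_le_mono) auto
  finally show ?thesis unfolding eq by simp
qed

lemma transfer:
  assumes pc: "proper_edge_coloring H 5 c" and i: "i < k"
    and g: "g \<in> edges G" "ends G g = {y1,x2}"
    and hyp: "\<And>c'. proper_edge_coloring G 5 c' \<Longrightarrow> 10 \<le> card (abnormal_edges G c')"
  shows "\<exists>f. pe f i \<in> abnormal_edges H c"
proof -
  define cc where "cc f = c (pe f i)" for f
  have fi: "finite (incident G v)" for v using fE unfolding incident_def by auto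
  have X4: "card ((incident G a \<union> incident G b) - {e}) \<le> 4"
    if "a \<in> verts G" "b \<in> verts G" "e \<in> incident G a" "e \<in> incident G b" for a b e
  proof -
    have "card (incident G a \<union> incident G b) + card (incident G a \<inter> incident G b) = 6"
      using card_Un_Int[OF fi fi, of a b] deg that(1,2) by simp
    moreover have "1 \<le> card (incident G a \<inter> incident G b)"
      using that(3,4) fi by (metis card_0_eq disjoint_iff finite_Int less_one not_le)
    moreover have "card ((incident G a \<union> incident G b) - {e}) = card (incident G a \<union> incident G b) - 1"
      using that(3) fi by (simp add: card_Diff_singleton)
    ultimately show ?thesis by simp
  qed
  have newcol: "\<exists>d \<in> {1..5}. d \<notin> cc ` X" if "finite X" "card X \<le> 4" for X
  proof (rule ccontr)
    assume "\<not> ?thesis"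
    then have "{1..5::nat} \<subseteq> cc ` X" by auto
    then have "card {1..5::nat} \<le> card (cc ` X)" using that by (intro card_mono) auto
    also have "\<dots> \<le> card X" by (simp add: card_image_le that(1))
    finally show False using that by simp
  qed
  define X1 where "X1 = (incident G x1 \<union> incident G y1) - {e1}"
  define X2 where "X2 = (incident G x2 \<union> incident G y2) - {e2}"
  have e1i: "e1 \<in> incident G x1" "e1 \<in> incident G y1" "e2 \<in> incident G x2" "e2 \<in> incident G y2"
    using e1E e1e e2E e2e unfolding incident_def by auto
  obtain d1 where d1: "d1 \<in> {1..5}" "d1 \<notin> cc ` X1"
    using newcol[of X1] X4[OF ports(1,2) e1i(1,2)] fi unfolding X1_def by blast
  obtain d2 where d2: "d2 \<in> {1..5}" "d2 \<notin> cc ` X2"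
    using newcol[of X2] X4[OF ports(3,4) e1i(3,4)] fi unfolding X2_def by blast
  define c' where "c' f = (if f = e1 then d1 else if f = e2 then d2 else cc f)" for f
  have pcH1: "\<And>e. e \<in> edges H \<Longrightarrow> c e \<in> {1..5}" using pc unfolding proper_edge_coloring_def by auto
  have pcH2: "\<And>e e'. e \<in> edges H \<Longrightarrow> e' \<in> edges H \<Longrightarrow> e \<noteq> e' \<Longrightarrow> ends H e \<inter> ends H e' \<noteq> {} \<Longrightarrow> c e \<noteq> c e'"
    using pc unfolding proper_edge_coloring_def by auto
  have adjX1: "f \<in> X1" if "f \<in> edges G" "f \<noteq> e1" "ends G f \<inter> ends G e1 \<noteq> {}" for f
    using that e1e unfolding X1_def incident_def by auto
  have adjX2: "f \<in> X2" if "f \<in> edges G" "f \<noteq> e2" "ends G f \<inter> ends G e2 \<noteq> {}" for f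
    using that e2e unfolding X2_def incident_def by auto
  have e12d: "ends G e1 \<inter> ends G e2 = {}" using e1e e2e dst by auto
  have pcG: "proper_edge_coloring G 5 c'"
    unfolding proper_edge_coloring_def
  proof (intro conjI ballI impI)
    fix e assume e: "e \<in> edges G"
    show "c' e \<in> {1..5}" using d1 d2 pcH1[of "pe e i"] e i He_iff unfolding c'_def cc_def by auto
  next
    fix e e' assume e: "e \<in> edges G" and e': "e' \<in> edges G" and ne: "e \<noteq> e' \<and> ends G e \<inter> ends G e' \<noteq> {}"
    show "c' e \<noteq> c' e'"
    proof (cases "e = e1 \<or> e = e2 \<or> e' = e1 \<or> e' = e2")
      case False
      have "ends H (pe e i) \<inter> ends H (pe e' i) \<noteq> {}"
        using ne False Hends_int[of e i] Hends_int[of e' i] by auto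
      then have "c (pe e i) \<noteq> c (pe e' i)" using pcH2 e e' i He_iff ne by simp
      then show ?thesis using False unfolding c'_def cc_def by simp
    next
      case True
      then show ?thesis
      proof (elim disjE)
        assume a: "e = e1"
        then have "e' \<noteq> e2" using ne e12d by auto
        then show ?thesis using a d1 adjX1[OF e'] ne unfolding c'_def by (auto simp: Int_commute)
      next
        assume a: "e = e2"
        then have "e' \<noteq> e1" using ne e12d by (auto simp: Int_commute)
        then show ?thesis using a d2 adjX2[OF e'] ne e12 unfolding c'_def by (auto simp: Int_commute)
      next
        assume a: "e' = e1"
        then have "e \<noteq> e2" using ne e12d by (auto simp: Int_commute)
        then show ?thesis using a d1 adjX1[OF e] ne unfolding c'_def by auto
      next
        assume a: "e' = e2"
        then have "e \<noteq> e1" using ne e12d by auto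
        then show ?thesis using a d2 adjX2[OF e] ne e12 unfolding c'_def by auto
      qed
    qed
  qed
  define Q where "Q = incident G x1 \<union> incident G y1 \<union> incident G x2 \<union> incident G y2"
  define A where "A = {f \<in> edges G. pe f i \<in> abnormal_edges H c}"
  have sub: "abnormal_edges G c' \<subseteq> Q \<union> A"
  proof
    fix f assume fa: "f \<in> abnormal_edges G c'"
    show "f \<in> Q \<union> A"
    proof (cases "f \<in> Q")
      case False
      have fE': "f \<in> edges G" using fa unfolding abnormal_edges_def by auto
      obtain u w where uw: "ends G f = {u,w}" "u \<noteq> w" "u \<in> verts G" "w \<in> verts G"
        using ends2[OF G fE'] by metis
      have nP: "u \<noteq> x1" "u \<noteq> y1" "u \<noteq> x2" "u \<noteq> y2" "w \<noteq> x1" "w \<noteq> y1" "w \<noteq> x2" "w \<noteq> y2"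
        using False fE' uw unfolding Q_def incident_def by auto
      have f12: "f \<noteq> e1" "f \<noteq> e2" using False e1i unfolding Q_def by auto
      have ccv: "c' h = c (pe h i)" if "h \<in> incident G v" "v \<noteq> x1" "v \<noteq> y1" "v \<noteq> x2" "v \<noteq> y2" for h v
      proof -
        have "h \<noteq> e1" "h \<noteq> e2" using that e1e e2e unfolding incident_def by auto
        then show ?thesis unfolding c'_def cc_def by simp
      qed
      have cu: "colors_at G c' u = colors_at H c (pe u i)"
        by (rule colors_same[OF uw(3) nP(1-4) i]) (use ccv nP in auto)
      have cw: "colors_at G c' w = colors_at H c (pe w i)"
        by (rule colors_same[OF uw(4) nP(5-8) i]) (use ccv nP in auto)
      have eH: "ends H (pe f i) = {pe u i, pe w i}" using Hends_int[OF f12] uw by simp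
      have "pe f i \<in> edges H" using fE' i He_iff by simp
      then have "pe f i \<in> abnormal_edges H c"
        using fa unfolding abnormal_edges_def
        using poor_iff[OF uw(1), of c'] rich_iff[OF uw(1), of c'] poor_iff[OF eH, of c] rich_iff[OF eH, of c] cu cw
        by simp
      then show ?thesis using fE' unfolding A_def by simp
    qed simp
  qed
  have fQ: "finite Q" unfolding Q_def using fi by simp
  have fA: "finite A" unfolding A_def using fE by simp
  have "10 \<le> card (abnormal_edges G c')" by (rule hyp[OF pcG])
  also have "\<dots> \<le> card (Q \<union> A)" using sub fQ fA by (intro card_mono) auto
  also have "\<dots> \<le> card Q + card A" by (rule card_Un_le)
  also have "\<dots> \<le> 9 + card A" using card_Q[OF g] unfolding Q_def by simp
  finally have "A \<noteq> {}" by auto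
  then show ?thesis unfolding A_def by auto
qed

end


lemma card_split': "card A \<le> card (A - B) + card (A \<inter> B)"
proof -
  have "A = (A - B) \<union> (A \<inter> B)" by auto
  then show ?thesis by (metis card_Un_le)
qed

lemma cubic_counts:
  assumes cub: "cubic G" shows "3 * card (verts G) = 2 * card (edges G)"
proof -
  have G: "multigraph G" using cub unfolding cubic_def by auto
  have "(\<Sum>v\<in>verts G. card (incident G v)) = 2 * card (inside G (verts G)) + card (cutE G (verts G))"
    by (rule handshake[OF G subset_refl])
  moreover have "(\<Sum>v\<in>verts G. card (incident G v)) = 3 * card (verts G)"
    using cub unfolding cubic_def by simp
  moreover have "inside G (verts G) = edges G" using G unfolding inside_def multigraph_def by auto
  moreover have "cutE G (verts G) = {}" using G unfolding cutE_def multigraph_def by auto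
  ultimately show ?thesis by simp
qed

lemma no_parallel:
  assumes cub: "cubic G" and ct: "CT G" and V: "5 \<le> card (verts G)"
    and a: "a \<in> edges G" and b: "b \<in> edges G" and ab: "a \<noteq> b" and eq: "ends G a = ends G b"
  shows False
proof -
  have G: "multigraph G" using cub unfolding cubic_def by auto
  obtain u w where uw: "ends G a = {u,w}" "u \<noteq> w" "u \<in> verts G" "w \<in> verts G" using ends2[OF G a] by metis
  let ?S = "{u,w}"
  have SV: "?S \<subseteq> verts G" using uw by auto
  have hs: "(\<Sum>v\<in>?S. card (incident G v)) = 2 * card (inside G ?S) + card (cutE G ?S)"
    by (rule handshake[OF G SV])
  have "(\<Sum>v\<in>?S. card (incident G v)) = 6" using cub uw unfolding cubic_def by simp
  moreover have "{a,b} \<subseteq> inside G ?S" using a b eq uw unfolding inside_def by auto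
  then have "2 \<le> card (inside G ?S)"
    using ab G unfolding inside_def multigraph_def
    by (metis (no_types, lifting) card_2_iff card_mono finite_subset mem_Collect_eq subsetI)
  ultimately have "card (cutE G ?S) \<le> 3" using hs by simp
  then have "card ?S \<le> 1 \<or> card (verts G - ?S) \<le> 1" using ct SV unfolding CT_def by blast
  moreover have "card ?S = 2" using uw by simp
  moreover have "card (verts G) \<le> card (verts G - ?S) + card ?S"
    using card_split'[of "verts G" ?S] card_mono[of ?S "verts G \<inter> ?S"] by (simp add: Int_absorb1 SV)
  ultimately show False using V by simp
qed

lemma find_path:
  assumes cub: "cubic G" and ct: "CT G" and V: "5 \<le> card (verts G)"
  obtains x1 y1 x2 y2 e1 e2 g where "e1 \<in> edges G" "ends G e1 = {x1,y1}"
    "e2 \<in> edges G" "ends G e2 = {x2,y2}" "g \<in> edges G" "ends G g = {y1,x2}"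
    "x1 \<noteq> y1" "x1 \<noteq> x2" "x1 \<noteq> y2" "y1 \<noteq> x2" "y1 \<noteq> y2" "x2 \<noteq> y2"
proof -
  have G: "multigraph G" using cub unfolding cubic_def by auto
  have deg: "\<And>v. v \<in> verts G \<Longrightarrow> card (incident G v) = 3" using cub unfolding cubic_def by auto
  have np: "\<And>a b. a \<in> edges G \<Longrightarrow> b \<in> edges G \<Longrightarrow> ends G a = ends G b \<Longrightarrow> a = b"
    using no_parallel[OF cub ct V] by blast
  have fE: "finite (edges G)" using G unfolding multigraph_def by auto
  have fi: "finite (incident G v)" for v using fE unfolding incident_def by auto
  obtain v0 where v0: "v0 \<in> verts G" using V by (metis all_not_in_conv card.empty not_numeral_le_zero)
  have "incident G v0 \<noteq> {}" using deg[OF v0] by auto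
  then obtain g where gE: "g \<in> edges G" using v0 unfolding incident_def by auto
  obtain y1 x2 where g: "ends G g = {y1,x2}" "y1 \<noteq> x2" "y1 \<in> verts G" "x2 \<in> verts G"
    using ends2[OF G gE] by metis
  have gi: "g \<in> incident G y1" "g \<in> incident G x2" using gE g unfolding incident_def by auto
  have "2 \<le> card (incident G y1 - {g})" using deg[OF g(3)] card_Diff_singleton[OF gi(1)] by simp
  then obtain e1 where e1: "e1 \<in> incident G y1" "e1 \<noteq> g" using two_elems by (metis Diff_iff singletonD)
  obtain x1 where x1: "x1 \<noteq> y1" "ends G e1 = {y1,x1}" using other_end[OF G e1(1)] by metis
  have e1E: "e1 \<in> edges G" using e1 unfolding incident_def by auto
  have x1x2: "x1 \<noteq> x2" using np[OF e1E gE] e1 x1 g by auto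
  have "2 \<le> card (incident G x2 - {g})" using deg[OF g(4)] card_Diff_singleton[OF gi(2)] by simp
  then obtain a b where ab: "a \<in> incident G x2 - {g}" "b \<in> incident G x2 - {g}" "a \<noteq> b" by (rule two_elems)
  obtain wa where wa: "wa \<noteq> x2" "ends G a = {x2,wa}" using other_end[OF G] ab(1) by blast
  obtain wb where wb: "wb \<noteq> x2" "ends G b = {x2,wb}" using other_end[OF G] ab(2) by blast
  have aE: "a \<in> edges G" and bE: "b \<in> edges G" using ab unfolding incident_def by auto
  have wab: "wa \<noteq> wb" using np[OF aE bE] wa wb ab(3) by auto
  obtain e2 y2 where e2: "e2 \<in> incident G x2 - {g}" "ends G e2 = {x2,y2}" "y2 \<noteq> x2" "y2 \<noteq> x1"
  proof (cases "wa = x1")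
    case True
    then show ?thesis using that[of b wb] ab wb wab by auto
  next
    case False
    then show ?thesis using that[of a wa] ab wa by auto
  qed
  have e2E: "e2 \<in> edges G" using e2 unfolding incident_def by auto
  have y2y1: "y2 \<noteq> y1" using np[OF e2E gE] e2 g by (auto simp: insert_commute)
  show ?thesis
    by (rule that[of e1 x1 y1 e2 x2 y2 g]) (use e1E x1 e2E e2 gE g x1x2 y2y1 in \<open>auto simp: insert_commute\<close>)
qed


lemma grow:
  assumes cub: "cubic G" and cy: "cyc4_edge_connected G"
    and hyp: "\<And>c'. proper_edge_coloring G 5 c' \<Longrightarrow> 10 \<le> card (abnormal_edges G c')"
    and hb: "\<forall>G. cubic G \<and> cyc4_edge_connected G \<longrightarrow>
               (\<exists>c. proper_edge_coloring G 5 c \<and> card (abnormal_edges G c) \<le> f (card (verts G)))"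
  shows "5 \<le> card (verts G) \<and> (\<forall>k\<ge>2. k \<le> f (card (verts G) * k))"
proof -
  have G: "multigraph G" using cub unfolding cubic_def by auto
  have fE: "finite (edges G)" using G unfolding multigraph_def by auto
  obtain c0 where c0: "proper_edge_coloring G 5 c0" using hb[rule_format, of G] cub cy by blast
  have "10 \<le> card (abnormal_edges G c0)" using hyp[OF c0] .
  also have "\<dots> \<le> card (edges G)" using fE unfolding abnormal_edges_def by (intro card_mono) auto
  finally have "10 \<le> card (edges G)" .
  then have V5: "5 \<le> card (verts G)" using cubic_counts[OF cub] by linarith
  have ct: "CT G" using cyc4_imp_CT[OF cub cy] .
  obtain x1 y1 x2 y2 e1 e2 g where p: "e1 \<in> edges G" "ends G e1 = {x1,y1}"
    "e2 \<in> edges G" "ends G e2 = {x2,y2}" "g \<in> edges G" "ends G g = {y1,x2}"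
    "x1 \<noteq> y1" "x1 \<noteq> x2" "x1 \<noteq> y2" "y1 \<noteq> x2" "y1 \<noteq> y2" "x2 \<noteq> y2"
    by (rule find_path[OF cub ct V5])
  have "k \<le> f (card (verts G) * k)" if k2: "2 \<le> k" for k
  proof -
    interpret N: necklace G k x1 y1 x2 y2 e1 e2
      by unfold_locales (use cub ct k2 p in auto)
    let ?H = "neck G k x1 y1 x2 y2 e1 e2"
    obtain c where c: "proper_edge_coloring ?H 5 c" "card (abnormal_edges ?H c) \<le> f (card (verts ?H))"
      using hb[rule_format, of ?H] N.H_cubic N.cyc4_H by blast
    have "\<forall>i\<in>{..<k}. \<exists>F. pe F i \<in> abnormal_edges ?H c"
    proof
      fix i assume "i \<in> {..<k}"
      then have "i < k" by simp
      then show "\<exists>F. pe F i \<in> abnormal_edges ?H c" by (rule N.transfer[OF c(1) _ p(5,6) hyp])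
    qed
    then have "\<exists>F. \<forall>i\<in>{..<k}. pe (F i) i \<in> abnormal_edges ?H c" by (rule bchoice)
    then obtain F where F: "\<forall>i\<in>{..<k}. pe (F i) i \<in> abnormal_edges ?H c" by (elim exE)
    have fa: "finite (abnormal_edges ?H c)"
      using N.H_multi unfolding multigraph_def abnormal_edges_def by auto
    have "card ((\<lambda>i. pe (F i) i) ` {..<k}) = k" by (subst card_image) (auto intro!: inj_onI)
    moreover have "card ((\<lambda>i. pe (F i) i) ` {..<k}) \<le> card (abnormal_edges ?H c)"
      using F fa by (intro card_mono) auto
    ultimately show ?thesis using c(2) N.H_card by simp
  qed
  then show ?thesis using V5 by blast
qed

lemma sublin_contra:
  assumes sub: "sublinear f" and n0: "1 \<le> n0" and big: "\<forall>k\<ge>2. k \<le> f (n0 * k)"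
  shows False
proof -
  have "(\<lambda>n. real (f n) / real n) \<longlonglongrightarrow> 0" using sub unfolding sublinear_def .
  moreover have "0 < 1 / real n0" using n0 by simp
  ultimately have "\<forall>\<^sub>F n in sequentially. real (f n) / real n < 1 / real n0"
    by (rule order_tendstoD(2))
  then obtain N where N: "\<And>n. n \<ge> N \<Longrightarrow> real (f n) / real n < 1 / real n0"
    unfolding eventually_sequentially by blast
  define k where "k = max 2 N"
  have k2: "2 \<le> k" unfolding k_def by simp
  have "N \<le> n0 * k" using n0 unfolding k_def by (metis le_trans max.cobounded2 mult_le_mono1 mult_1)
  then have lt: "real (f (n0 * k)) / real (n0 * k) < 1 / real n0" using N by blast
  have ge: "real k \<le> real (f (n0 * k))" using big k2 by simp
  have pos: "0 < real (n0 * k)" using n0 k2 by simp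
  have "1 / real n0 = real k / real (n0 * k)" using n0 k2 by (simp add: field_simps)
  also have "\<dots> \<le> real (f (n0 * k)) / real (n0 * k)"
    by (rule divide_right_mono[OF ge]) (use pos in linarith)
  finally show False using lt by simp
qed

theorem mainTheorem5:
  shows "(\<forall>G. cubic G \<and> cyc4_edge_connected G \<longrightarrow>
            (\<exists>c. proper_edge_coloring G 5 c \<and> card (abnormal_edges G c) \<le> 9))
     \<longleftrightarrow>
         (\<exists>f. sublinear f \<and>
            (\<forall>G. cubic G \<and> cyc4_edge_connected G \<longrightarrow>
               (\<exists>c. proper_edge_coloring G 5 c \<and> card (abnormal_edges G c) \<le> f (card (verts G)))))"
proof
  assume a: "\<forall>G. cubic G \<and> cyc4_edge_connected G \<longrightarrow>
            (\<exists>c. proper_edge_coloring G 5 c \<and> card (abnormal_edges G c) \<le> 9)"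
  have "sublinear (\<lambda>_. 9)" unfolding sublinear_def using lim_const_over_n[of 9] by simp
  then show "\<exists>f. sublinear f \<and>
            (\<forall>G. cubic G \<and> cyc4_edge_connected G \<longrightarrow>
               (\<exists>c. proper_edge_coloring G 5 c \<and> card (abnormal_edges G c) \<le> f (card (verts G))))"
    using a by (intro exI[of _ "\<lambda>_. 9"]) auto
next
  assume "\<exists>f. sublinear f \<and>
            (\<forall>G. cubic G \<and> cyc4_edge_connected G \<longrightarrow>
               (\<exists>c. proper_edge_coloring G 5 c \<and> card (abnormal_edges G c) \<le> f (card (verts G))))"
  then obtain f where sub: "sublinear f" and hb: "\<forall>G. cubic G \<and> cyc4_edge_connected G \<longrightarrow>
               (\<exists>c. proper_edge_coloring G 5 c \<and> card (abnormal_edges G c) \<le> f (card (verts G)))"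
    by blast
  show "\<forall>G. cubic G \<and> cyc4_edge_connected G \<longrightarrow>
            (\<exists>c. proper_edge_coloring G 5 c \<and> card (abnormal_edges G c) \<le> 9)"
  proof (intro allI impI)
    fix G assume G: "cubic G \<and> cyc4_edge_connected G"
    show "\<exists>c. proper_edge_coloring G 5 c \<and> card (abnormal_edges G c) \<le> 9"
    proof (rule ccontr)
      assume "\<not> ?thesis"
      then have hyp: "\<And>c'. proper_edge_coloring G 5 c' \<Longrightarrow> 10 \<le> card (abnormal_edges G c')" by force
      have "5 \<le> card (verts G) \<and> (\<forall>k\<ge>2. k \<le> f (card (verts G) * k))"
        using grow[of G f] G hyp hb by blast
      then show False using sublin_contra[OF sub, of "card (verts G)"] by simp
    qed
  qed
qed


end
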